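(* Let $\mathcal{M}$ be a monotone gridding matrix such that the cell graph $G_\mathcal{M}$ contains a cycle. Then $\mathrm{Grid}(\mathcal{M})$ has unbounded grid-width, i.e., for every $w$ there is $\pi\in\mathrm{Grid}(\mathcal{M})$ of grid-width greater than $w$.
   Context: $\mathrm{Inc}$ and $\mathrm{Dec}$ denote the classes of increasing and decreasing permutations. A monotone gridding matrix $\mathcal{M}$ is a $k\times\ell$ matrix with entries in $\{\mathrm{Inc},\mathrm{Dec},\emptyset\}$. An $\mathcal{M}$-gridding of a permutation $\pi$ of length $n$ (identified with its diagram $\{(i,\pi_i)\}$) consists of possibly empty disjoint integer intervals $I_1<\dots<I_k$ and $J_1<\dots<J_\ell$, each family with union $[n]$, such that the points in each cell $I_i\times J_j$ form a pattern in $\mathcal{M}_{i,j}$; $\mathrm{Grid}(\mathcal{M})$ is the class of permutations having an $\mathcal{M}$-gridding. The cell graph $G_\mathcal{M}$ has as vertices the cells with infinite entries, adjacent when they share a row or column and all cells strictly between them are finite or empty. The intervalicity of $A\subseteq[n]$ is the least number of disjoint integer intervals with union $A$; the grid-complexity of a point set is the maximum of the intervalicities of its two axis projections. A grid tree of $\pi$ is a rooted binary tree whose leaves are labeled bijectively by the points of $\pi$; its grid-width is the maximum over vertices $v$ of the grid-complexity of the leaf labels below $v$; the grid-width of $\pi$ is the minimum grid-width of a grid tree of $\pi$. *)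

theory Defs
  imports Main
begin

text \<open>Entries of a monotone gridding matrix: the classes Inc, Dec and the empty class.\<close>
datatype cell = Inc | Dec | Emp

fun cell_ok :: "cell \<Rightarrow> (nat \<times> nat) set \<Rightarrow> bool" where
  "cell_ok Inc P = (\<forall>(a,b)\<in>P. \<forall>(c,d)\<in>P. a < c \<longrightarrow> b < d)"
| "cell_ok Dec P = (\<forall>(a,b)\<in>P. \<forall>(c,d)\<in>P. a < c \<longrightarrow> b > d)"
| "cell_ok Emp P = (P = {})"

definition is_perm :: "nat \<Rightarrow> (nat \<Rightarrow> nat) \<Rightarrow> bool" where
  "is_perm n \<pi> \<longleftrightarrow> bij_betw \<pi> {1..n} {1..n}"

definition diagram :: "nat \<Rightarrow> (nat \<Rightarrow> nat) \<Rightarrow> (nat \<times> nat) set" where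
  "diagram n \<pi> = {(i, \<pi> i) | i. i \<in> {1..n}}"

text \<open>Integer intervals (possibly empty).\<close>
definition int_interval :: "nat set \<Rightarrow> bool" where
  "int_interval S \<longleftrightarrow> (\<exists>a b. S = {a..b})"

definition interval_partition :: "nat \<Rightarrow> nat \<Rightarrow> (nat \<Rightarrow> nat set) \<Rightarrow> bool" where
  "interval_partition k n I \<longleftrightarrow>
     (\<forall>i\<in>{1..k}. int_interval (I i)) \<and>
     (\<forall>i i'. 1 \<le> i \<and> i < i' \<and> i' \<le> k \<longrightarrow> (\<forall>x\<in>I i. \<forall>y\<in>I i'. x < y)) \<and>
     (\<Union>i\<in>{1..k}. I i) = {1..n}"

text \<open>M is a k x l matrix (entries M i j, 1 \<le> i \<le> k, 1 \<le> j \<le> l); an M-gridding of \<pi>.\<close>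
definition is_gridding :: "nat \<Rightarrow> nat \<Rightarrow> (nat \<Rightarrow> nat \<Rightarrow> cell) \<Rightarrow> nat \<Rightarrow> (nat \<Rightarrow> nat)
    \<Rightarrow> (nat \<Rightarrow> nat set) \<Rightarrow> (nat \<Rightarrow> nat set) \<Rightarrow> bool" where
  "is_gridding k l M n \<pi> I J \<longleftrightarrow>
     interval_partition k n I \<and> interval_partition l n J \<and>
     (\<forall>i\<in>{1..k}. \<forall>j\<in>{1..l}. cell_ok (M i j) (diagram n \<pi> \<inter> (I i \<times> J j)))"

definition in_Grid :: "nat \<Rightarrow> nat \<Rightarrow> (nat \<Rightarrow> nat \<Rightarrow> cell) \<Rightarrow> nat \<Rightarrow> (nat \<Rightarrow> nat) \<Rightarrow> bool" where
  "in_Grid k l M n \<pi> \<longleftrightarrow> is_perm n \<pi> \<and> (\<exists>I J. is_gridding k l M n \<pi> I J)"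

text \<open>Cell graph: vertices are cells with infinite entries (Inc/Dec).\<close>
definition cg_vertex :: "nat \<Rightarrow> nat \<Rightarrow> (nat \<Rightarrow> nat \<Rightarrow> cell) \<Rightarrow> nat \<times> nat \<Rightarrow> bool" where
  "cg_vertex k l M c \<longleftrightarrow> fst c \<in> {1..k} \<and> snd c \<in> {1..l} \<and> M (fst c) (snd c) \<noteq> Emp"

definition cg_adj :: "nat \<Rightarrow> nat \<Rightarrow> (nat \<Rightarrow> nat \<Rightarrow> cell) \<Rightarrow> nat \<times> nat \<Rightarrow> nat \<times> nat \<Rightarrow> bool" where
  "cg_adj k l M c d \<longleftrightarrow>
     cg_vertex k l M c \<and> cg_vertex k l M d \<and> c \<noteq> d \<and>
     ((fst c = fst d \<and> (\<forall>j. min (snd c) (snd d) < j \<and> j < max (snd c) (snd d) \<longrightarrow> M (fst c) j = Emp)) \<or>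
      (snd c = snd d \<and> (\<forall>i. min (fst c) (fst d) < i \<and> i < max (fst c) (fst d) \<longrightarrow> M i (snd c) = Emp)))"

definition cg_has_cycle :: "nat \<Rightarrow> nat \<Rightarrow> (nat \<Rightarrow> nat \<Rightarrow> cell) \<Rightarrow> bool" where
  "cg_has_cycle k l M \<longleftrightarrow>
     (\<exists>cs. length cs \<ge> 3 \<and> distinct cs \<and>
        (\<forall>t < length cs. cg_adj k l M (cs ! t) (cs ! ((t + 1) mod length cs))))"

definition intervalicity :: "nat set \<Rightarrow> nat" where
  "intervalicity A = (LEAST m. \<exists>F. finite F \<and> card F = m \<and>
       (\<forall>S\<in>F. \<exists>a b. a \<le> b \<and> S = {a..b}) \<and>
       (\<forall>S\<in>F. \<forall>T\<in>F. S \<noteq> T \<longrightarrow> S \<inter> T = {}) \<and> \<Union>F = A)"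

definition grid_complexity :: "(nat \<times> nat) set \<Rightarrow> nat" where
  "grid_complexity P = max (intervalicity (fst ` P)) (intervalicity (snd ` P))"

datatype 'a btree = Leaf 'a | Node "'a btree" "'a btree"

fun leaves :: "'a btree \<Rightarrow> 'a list" where
  "leaves (Leaf x) = [x]"
| "leaves (Node l r) = leaves l @ leaves r"

definition is_grid_tree :: "(nat \<times> nat) set \<Rightarrow> (nat \<times> nat) btree \<Rightarrow> bool" where
  "is_grid_tree P T \<longleftrightarrow> distinct (leaves T) \<and> set (leaves T) = P"

fun tree_grid_width :: "(nat \<times> nat) btree \<Rightarrow> nat" where
  "tree_grid_width (Leaf x) = grid_complexity {x}"
| "tree_grid_width (Node l r) =
     max (grid_complexity (set (leaves (Node l r)))) (max (tree_grid_width l) (tree_grid_width r))"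

definition grid_width :: "nat \<Rightarrow> (nat \<Rightarrow> nat) \<Rightarrow> nat" where
  "grid_width n \<pi> = (LEAST w. \<exists>T. is_grid_tree (diagram n \<pi>) T \<and> tree_grid_width T = w)"

end

theory Submission
  imports Defs
begin


lemma interv_witness:
  assumes "finite X"
  shows "\<exists>F. finite F \<and> card F = intervalicity X \<and>
       (\<forall>S\<in>F. \<exists>a b. a \<le> b \<and> S = {a..b}) \<and>
       (\<forall>S\<in>F. \<forall>T\<in>F. S \<noteq> T \<longrightarrow> S \<inter> T = {}) \<and> \<Union>F = X"
proof -
  let ?P = "\<lambda>m. \<exists>F. finite F \<and> card F = m \<and>
       (\<forall>S\<in>F. \<exists>a b. a \<le> b \<and> S = {a..b}) \<and>
       (\<forall>S\<in>F. \<forall>T\<in>F. S \<noteq> T \<longrightarrow> S \<inter> T = {}) \<and> \<Union>F = X"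
  have s1: "\<forall>S\<in>(\<lambda>a. {a..a}) ` X. \<exists>a b. a \<le> b \<and> S = {a..b}" by blast
  have "?P (card ((\<lambda>a. {a..a}) ` X))"
    using assms s1 by (intro exI[of _ "(\<lambda>a. {a..a}) ` X"]) auto
  hence "?P (LEAST m. ?P m)" by (rule LeastI)
  thus ?thesis unfolding intervalicity_def .
qed

lemma right_ends_le:
  assumes "finite X"
  shows "card {u\<in>X. Suc u \<notin> X} \<le> intervalicity X"
proof -
  obtain F where F: "finite F" "card F = intervalicity X"
    "\<forall>S\<in>F. \<exists>a b. a \<le> b \<and> S = {a..b}" "\<Union>F = X"
    using interv_witness[OF assms] by blast
  define g where "g u = (SOME S. S \<in> F \<and> u \<in> S)" for u
  have g: "g u \<in> F \<and> u \<in> g u" if "u \<in> X" for u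
    unfolding g_def by (rule someI_ex) (use that F(4) in blast)
  have "inj_on g {u\<in>X. Suc u \<notin> X}"
  proof (rule inj_onI)
    fix u v assume u: "u \<in> {u\<in>X. Suc u \<notin> X}" and v: "v \<in> {u\<in>X. Suc u \<notin> X}" and e: "g u = g v"
    obtain a b where ab: "g u = {a..b}" using F(3) g u by blast
    have "g u \<subseteq> X" using g[of u] u F(4) by blast
    have "u = b"
    proof -
      have "a \<le> u" "u \<le> b" using ab g[of u] u by auto
      moreover have "\<not> u < b"
      proof
        assume "u < b" hence "Suc u \<in> g u" using ab \<open>a \<le> u\<close> by auto
        thus False using \<open>g u \<subseteq> X\<close> u by auto
      qed
      ultimately show ?thesis by simp
    qed
    moreover have "v = b"
    proof -
      have "a \<le> v" "v \<le> b" using ab e g[of v] v by auto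
      moreover have "\<not> v < b"
      proof
        assume "v < b" hence "Suc v \<in> g u" using ab \<open>a \<le> v\<close> by auto
        thus False using \<open>g u \<subseteq> X\<close> v by auto
      qed
      ultimately show ?thesis by simp
    qed
    ultimately show "u = v" by simp
  qed
  moreover have "g ` {u\<in>X. Suc u \<notin> X} \<subseteq> F" using g by auto
  ultimately have "card {u\<in>X. Suc u \<notin> X} \<le> card F" using card_inj_on_le F(1) by blast
  thus ?thesis using F(2) by simp
qed

lemma left_starts_le:
  assumes "finite X"
  shows "card {u. u \<notin> X \<and> Suc u \<in> X} \<le> intervalicity X"
proof -
  obtain F where F: "finite F" "card F = intervalicity X"
    "\<forall>S\<in>F. \<exists>a b. a \<le> b \<and> S = {a..b}" "\<Union>F = X"
    using interv_witness[OF assms] by blast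
  define g where "g u = (SOME S. S \<in> F \<and> Suc u \<in> S)" for u
  have g: "g u \<in> F \<and> Suc u \<in> g u" if "Suc u \<in> X" for u
    unfolding g_def by (rule someI_ex) (use that F(4) in blast)
  have "inj_on g {u. u \<notin> X \<and> Suc u \<in> X}"
  proof (rule inj_onI)
    fix u v assume u: "u \<in> {u. u \<notin> X \<and> Suc u \<in> X}" and v: "v \<in> {u. u \<notin> X \<and> Suc u \<in> X}" and e: "g u = g v"
    obtain a b where ab: "g u = {a..b}" using F(3) g u by blast
    have sub: "g u \<subseteq> X" using g[of u] u F(4) by blast
    have "Suc u = a"
    proof -
      have "a \<le> Suc u" "Suc u \<le> b" using ab g[of u] u by auto
      moreover have "\<not> a \<le> u" using ab sub u \<open>Suc u \<le> b\<close> by auto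
      ultimately show ?thesis by simp
    qed
    moreover have "Suc v = a"
    proof -
      have "a \<le> Suc v" "Suc v \<le> b" using ab e g[of v] v by auto
      moreover have "\<not> a \<le> v" using ab e sub v \<open>Suc v \<le> b\<close> by auto
      ultimately show ?thesis by simp
    qed
    ultimately show "u = v" by simp
  qed
  moreover have "g ` {u. u \<notin> X \<and> Suc u \<in> X} \<subseteq> F" using g by auto
  ultimately have "card {u. u \<notin> X \<and> Suc u \<in> X} \<le> card F" using card_inj_on_le F(1) by blast
  thus ?thesis using F(2) by simp
qed


lemma tgw_ge: "grid_complexity (set (leaves T)) \<le> tree_grid_width T"
  by (cases T) auto

lemma tree_sep:
  assumes U: "finite U" "3 \<le> 2 * card U"
  shows "3 * card (set (leaves T) \<inter> U) > card U \<Longrightarrow>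
    \<exists>T'. 3 * card (set (leaves T') \<inter> U) > card U \<and> 3 * card (set (leaves T') \<inter> U) \<le> 2 * card U
       \<and> grid_complexity (set (leaves T')) \<le> tree_grid_width T \<and> set (leaves T') \<subseteq> set (leaves T)"
proof (induction T)
  case (Leaf x)
  have "card (set (leaves (Leaf x)) \<inter> U) \<le> 1"
    by (simp add: card_le_Suc0_iff_eq)
  thus ?case using Leaf U tgw_ge[of "Leaf x"] by (intro exI[of _ "Leaf x"]) auto
next
  case (Node l r)
  show ?case
  proof (cases "3 * card (set (leaves (Node l r)) \<inter> U) \<le> 2 * card U")
    case True thus ?thesis using Node.prems tgw_ge[of "Node l r"] by (intro exI[of _ "Node l r"]) simp
  next
    case False
    have "set (leaves (Node l r)) \<inter> U = (set (leaves l) \<inter> U) \<union> (set (leaves r) \<inter> U)" by auto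
    hence le: "card (set (leaves (Node l r)) \<inter> U) \<le> card (set (leaves l) \<inter> U) + card (set (leaves r) \<inter> U)"
      by (metis card_Un_le)
    show ?thesis
    proof (cases "card (set (leaves l) \<inter> U) \<ge> card (set (leaves r) \<inter> U)")
      case True
      hence "3 * card (set (leaves l) \<inter> U) > card U" using False le by linarith
      from Node.IH(1)[OF this] obtain T' where "3 * card (set (leaves T') \<inter> U) > card U \<and> 3 * card (set (leaves T') \<inter> U) \<le> 2 * card U
       \<and> grid_complexity (set (leaves T')) \<le> tree_grid_width l \<and> set (leaves T') \<subseteq> set (leaves l)" by blast
      thus ?thesis by (intro exI[of _ T']) auto
    next
      case F2: False
      hence "3 * card (set (leaves r) \<inter> U) > card U" using False le by linarith
      from Node.IH(2)[OF this] obtain T' where "3 * card (set (leaves T') \<inter> U) > card U \<and> 3 * card (set (leaves T') \<inter> U) \<le> 2 * card U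
       \<and> grid_complexity (set (leaves T')) \<le> tree_grid_width r \<and> set (leaves T') \<subseteq> set (leaves r)" by blast
      thus ?thesis by (intro exI[of _ T']) auto
    qed
  qed
qed


lemma exists_tree:
  "xs \<noteq> [] \<Longrightarrow> \<exists>T. leaves T = xs"
proof (induction xs)
  case Nil thus ?case by simp
next
  case (Cons x xs)
  show ?case
  proof (cases "xs = []")
    case True thus ?thesis by (intro exI[of _ "Leaf x"]) simp
  next
    case False
    then obtain T where "leaves T = xs" using Cons.IH by blast
    thus ?thesis by (intro exI[of _ "Node (Leaf x) T"]) simp
  qed
qed

lemma grid_width_gt:
  assumes "finite (diagram n \<pi>)" "diagram n \<pi> \<noteq> {}"
    and "\<And>T. is_grid_tree (diagram n \<pi>) T \<Longrightarrow> tree_grid_width T > w"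
  shows "grid_width n \<pi> > w"
proof -
  obtain xs where xs: "set xs = diagram n \<pi>" "distinct xs"
    using assms(1) finite_distinct_list by blast
  have "xs \<noteq> []" using xs(1) assms(2) by auto
  then obtain T where T: "leaves T = xs" using exists_tree by blast
  have "is_grid_tree (diagram n \<pi>) T" unfolding is_grid_tree_def using T xs by simp
  hence ex: "\<exists>w'. \<exists>T. is_grid_tree (diagram n \<pi>) T \<and> tree_grid_width T = w'"
    by blast
  have "\<exists>T. is_grid_tree (diagram n \<pi>) T \<and> tree_grid_width T = grid_width n \<pi>"
    unfolding grid_width_def using LeastI_ex[OF ex] .
  then obtain T0 where "is_grid_tree (diagram n \<pi>) T0" "tree_grid_width T0 = grid_width n \<pi>" by blast
  thus ?thesis using assms(3)[of T0] by simp
qed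


definition rk :: "('a \<Rightarrow> nat) \<Rightarrow> 'a set \<Rightarrow> 'a \<Rightarrow> nat" where
  "rk f A p = card {q\<in>A. f q < f p} + 1"

context
  fixes f :: "'a \<Rightarrow> nat" and A :: "'a set"
  assumes finA: "finite A" and injf: "inj_on f A"
begin

lemma rk_less: "p \<in> A \<Longrightarrow> q \<in> A \<Longrightarrow> f p < f q \<Longrightarrow> rk f A p < rk f A q"
proof -
  assume pq: "p \<in> A" "q \<in> A" "f p < f q"
  have "{q'\<in>A. f q' < f p} \<subset> {q'\<in>A. f q' < f q}" using pq by auto
  hence "card {q'\<in>A. f q' < f p} < card {q'\<in>A. f q' < f q}"
    by (rule psubset_card_mono[rotated]) (use finA in auto)
  thus ?thesis unfolding rk_def by simp
qed

lemma rk_less_iff: "p \<in> A \<Longrightarrow> q \<in> A \<Longrightarrow> rk f A p < rk f A q \<longleftrightarrow> f p < f q"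
proof -
  assume pq: "p \<in> A" "q \<in> A"
  show ?thesis
  proof
    assume "rk f A p < rk f A q"
    show "f p < f q"
    proof (rule ccontr)
      assume "\<not> f p < f q"
      hence "f q < f p \<or> f q = f p" by auto
      thus False
      proof
        assume "f q < f p" thus False using rk_less[OF pq(2) pq(1)] \<open>rk f A p < rk f A q\<close> by simp
      next
        assume "f q = f p" hence "q = p" using injf pq by (auto dest: inj_onD)
        thus False using \<open>rk f A p < rk f A q\<close> by simp
      qed
    qed
  qed (rule rk_less[OF pq])
qed

lemma rk_inj: "inj_on (rk f A) A"
proof (rule inj_onI)
  fix p q assume pq: "p \<in> A" "q \<in> A" "rk f A p = rk f A q"
  have "\<not> f p < f q" using rk_less_iff[OF pq(1) pq(2)] pq(3) by simp
  moreover have "\<not> f q < f p" using rk_less_iff[OF pq(2) pq(1)] pq(3) by simp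
  ultimately have "f p = f q" by simp
  thus "p = q" using injf pq by (auto dest: inj_onD)
qed

lemma rk_range: "p \<in> A \<Longrightarrow> rk f A p \<in> {1..card A}"
proof -
  assume p: "p \<in> A"
  have "{q\<in>A. f q < f p} \<subset> A" using p by auto
  hence "card {q\<in>A. f q < f p} < card A" using finA by (rule psubset_card_mono[rotated])
  thus ?thesis unfolding rk_def by simp
qed

lemma rk_bij: "bij_betw (rk f A) A {1..card A}"
proof -
  have sub: "rk f A ` A \<subseteq> {1..card A}" using rk_range by auto
  have "card (rk f A ` A) = card A" using card_image[OF rk_inj] .
  hence "rk f A ` A = {1..card A}" using sub by (intro card_subset_eq) auto
  thus ?thesis using rk_inj unfolding bij_betw_def by simp
qed

lemma rk_succ: "p \<in> A \<Longrightarrow> q \<in> A \<Longrightarrow> f q = Suc (f p) \<Longrightarrow> rk f A q = Suc (rk f A p)"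
proof -
  assume pq: "p \<in> A" "q \<in> A" "f q = Suc (f p)"
  have "{q'\<in>A. f q' < f q} = insert p {q'\<in>A. f q' < f p}"
    using pq injf by (auto dest: inj_onD simp: less_Suc_eq)
  moreover have "finite {q'\<in>A. f q' < f p}" using finA by simp
  ultimately show ?thesis unfolding rk_def by simp
qed

lemma rk_interval:
  "rk f A ` {p\<in>A. a \<le> f p \<and> f p < b} = {card {q\<in>A. f q < a} + 1 .. card {q\<in>A. f q < b}}"
proof
  show "rk f A ` {p\<in>A. a \<le> f p \<and> f p < b} \<subseteq> {card {q\<in>A. f q < a} + 1 .. card {q\<in>A. f q < b}}"
  proof
    fix m assume "m \<in> rk f A ` {p\<in>A. a \<le> f p \<and> f p < b}"
    then obtain p where p: "p \<in> A" "a \<le> f p" "f p < b" "m = rk f A p" by auto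
    have "card {q\<in>A. f q < a} \<le> card {q\<in>A. f q < f p}"
      using p finA by (intro card_mono) auto
    moreover have "insert p {q\<in>A. f q < f p} \<subseteq> {q\<in>A. f q < b}" using p by auto
    hence "card (insert p {q\<in>A. f q < f p}) \<le> card {q\<in>A. f q < b}"
      using finA by (intro card_mono) auto
    hence "card {q\<in>A. f q < f p} + 1 \<le> card {q\<in>A. f q < b}" using finA by simp
    ultimately show "m \<in> {card {q\<in>A. f q < a} + 1 .. card {q\<in>A. f q < b}}"
      using p unfolding rk_def by simp
  qed
next
  show "{card {q\<in>A. f q < a} + 1 .. card {q\<in>A. f q < b}} \<subseteq> rk f A ` {p\<in>A. a \<le> f p \<and> f p < b}"
  proof
    fix m assume m: "m \<in> {card {q\<in>A. f q < a} + 1 .. card {q\<in>A. f q < b}}"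
    have "card {q\<in>A. f q < b} \<le> card A" using finA by (intro card_mono) auto
    hence "m \<in> {1..card A}" using m by auto
    hence "m \<in> rk f A ` A" using rk_bij unfolding bij_betw_def by simp
    then obtain p where p: "p \<in> A" "m = rk f A p" by blast
    have "a \<le> f p"
    proof (rule ccontr)
      assume "\<not> a \<le> f p"
      hence "insert p {q\<in>A. f q < f p} \<subseteq> {q\<in>A. f q < a}" using p by auto
      hence "card (insert p {q\<in>A. f q < f p}) \<le> card {q\<in>A. f q < a}"
        using finA by (intro card_mono) auto
      hence "card {q\<in>A. f q < f p} + 1 \<le> card {q\<in>A. f q < a}" using finA by simp
      thus False using m p unfolding rk_def by simp
    qed
    moreover have "f p < b"
    proof (rule ccontr)
      assume "\<not> f p < b"
      hence "{q\<in>A. f q < b} \<subseteq> {q\<in>A. f q < f p}" by auto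
      hence "card {q\<in>A. f q < b} \<le> card {q\<in>A. f q < f p}"
        using finA by (intro card_mono) auto
      thus False using m p unfolding rk_def by simp
    qed
    ultimately show "m \<in> rk f A ` {p\<in>A. a \<le> f p \<and> f p < b}" using p by auto
  qed
qed

end


definition shr :: "nat \<times> nat \<Rightarrow> nat \<times> nat \<Rightarrow> bool" where
  "shr a b \<longleftrightarrow> fst a = fst b \<or> snd a = snd b"

definition nxt :: "'a list \<Rightarrow> nat \<Rightarrow> 'a" where
  "nxt xs t = xs ! ((t + 1) mod length xs)"

definition good :: "nat \<Rightarrow> nat \<Rightarrow> (nat \<Rightarrow> nat \<Rightarrow> cell) \<Rightarrow> (nat \<times> nat) list \<Rightarrow> bool" where
  "good k l M xs \<longleftrightarrow> 3 \<le> length xs \<and> distinct xs \<and> (\<forall>x\<in>set xs. cg_vertex k l M x) \<and>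
     (\<forall>t<length xs. shr (xs!t) (nxt xs t)) \<and>
     (\<exists>t<length xs. fst (xs!t) = fst (nxt xs t)) \<and>
     (\<exists>t<length xs. fst (xs!t) \<noteq> fst (nxt xs t))"

lemma lt_len_ne: "(t::nat) < length xs \<Longrightarrow> xs \<noteq> []" by (cases xs) auto
lemma le_len_ne: "Suc (t::nat) \<le> length xs \<Longrightarrow> xs \<noteq> []" by (cases xs) auto

lemma rot_nth: "t < length xs \<Longrightarrow> rotate n xs ! t = xs ! ((n + t) mod length xs)"
  by (rule nth_rotate)

lemma rot_nxt: "t < length xs \<Longrightarrow> nxt (rotate n xs) t = nxt xs ((n + t) mod length xs)"
proof -
  assume t: "t < length xs"
  hence L: "length xs > 0" by linarith
  have ne: "xs \<noteq> []" using L by (cases xs) auto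
  have "(t + 1) mod length xs < length xs" using L by simp
  hence "nxt (rotate n xs) t = xs ! ((n + (t + 1) mod length xs) mod length xs)"
    unfolding nxt_def using ne by (auto simp: nth_rotate lt_len_ne)
  also have "(n + (t + 1) mod length xs) mod length xs = (n + (t + 1)) mod length xs"
    by (rule mod_add_right_eq)
  also have "(n + (t + 1)) mod length xs = ((n + t) mod length xs + 1) mod length xs"
    using mod_Suc_eq[of "n+t" "length xs"] by simp
  finally show ?thesis unfolding nxt_def by simp
qed

lemma rot_surj: "t' < (L::nat) \<Longrightarrow> t0 < L \<Longrightarrow> \<exists>u<L. (t0 + u) mod L = t'"
proof -
  assume a: "t' < L" "t0 < L"
  show ?thesis
  proof (cases "t0 \<le> t'")
    case True thus ?thesis using a by (intro exI[of _ "t' - t0"]) auto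
  next
    case False
    hence "(t0 + (L + t' - t0)) mod L = t'" using a
      by (metis add.commute add_diff_inverse_nat diff_add_inverse2 le_add2 less_imp_le_nat mod_add_self2 mod_less nat_diff_split_asm ordered_cancel_comm_monoid_diff_class.add_diff_assoc2)
    thus ?thesis using a False by (intro exI[of _ "L + t' - t0"]) auto
  qed
qed

lemma good_rotate:
  assumes g: "good k l M xs" and t0: "t0 < length xs"
  shows "good k l M (rotate t0 xs)"
proof -
  let ?L = "length xs"
  have L: "length (rotate t0 xs) = ?L" by simp
  have A: "\<forall>t<?L. shr (rotate t0 xs ! t) (nxt (rotate t0 xs) t)"
  proof (intro allI impI)
    fix t assume t: "t < ?L"
    hence "(t0 + t) mod ?L < ?L" by (intro mod_less_divisor) linarith
    thus "shr (rotate t0 xs ! t) (nxt (rotate t0 xs) t)"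
      using g t unfolding good_def by (auto simp: rot_nth rot_nxt lt_len_ne)
  qed
  obtain t1 where t1: "t1 < ?L" "fst (xs!t1) = fst (nxt xs t1)" using g unfolding good_def by blast
  obtain u1 where u1: "u1 < ?L" "(t0 + u1) mod ?L = t1" using rot_surj[OF t1(1) t0] by blast
  obtain t2 where t2: "t2 < ?L" "fst (xs!t2) \<noteq> fst (nxt xs t2)" using g unfolding good_def by blast
  obtain u2 where u2: "u2 < ?L" "(t0 + u2) mod ?L = t2" using rot_surj[OF t2(1) t0] by blast
  show ?thesis unfolding good_def L
  proof (intro conjI)
    show "3 \<le> ?L" using g unfolding good_def by simp
    show "distinct (rotate t0 xs)" using g unfolding good_def by simp
    show "\<forall>x\<in>set (rotate t0 xs). cg_vertex k l M x" using g unfolding good_def by simp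
    show "\<forall>t<?L. shr (rotate t0 xs ! t) (nxt (rotate t0 xs) t)" using A .
    show "\<exists>t<?L. fst (rotate t0 xs ! t) = fst (nxt (rotate t0 xs) t)"
      using u1 t1 by (intro exI[of _ u1]) (simp add: rot_nth rot_nxt)
    show "\<exists>t<?L. fst (rotate t0 xs ! t) \<noteq> fst (nxt (rotate t0 xs) t)"
      using u2 t2 by (intro exI[of _ u2]) (simp add: rot_nth rot_nxt)
  qed
qed

lemma step0:
  assumes g: "good k l M xs" and ty: "(fst (xs!0) = fst (xs!1)) = (fst (xs!1) = fst (xs!2))"
  shows "good k l M (xs!0 # drop 2 xs)"
proof -
  let ?L = "length xs"
  let ?zs = "xs!0 # drop 2 xs"
  have L3: "3 \<le> ?L" and dist: "distinct xs" and sh: "\<forall>t<?L. shr (xs!t) (nxt xs t)"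
    using g unfolding good_def by auto
  have n0: "nxt xs 0 = xs!1" using L3 unfolding nxt_def by auto
  have "(1+1) mod ?L = (2::nat)" using L3 by simp
  hence n1: "nxt xs 1 = xs!2" unfolding nxt_def by simp
  have s01: "shr (xs!0) (xs!1)" using sh n0 L3 by (metis less_le_trans zero_less_numeral)
  have s12: "shr (xs!1) (xs!2)" using sh n1 L3 by (metis less_le_trans one_less_numeral_iff semiring_norm(77))
  have ne02: "xs!0 \<noteq> xs!2" using nth_eq_iff_index_eq[OF dist, of 0 2] L3 le_len_ne[of 2 xs] by auto
  have claimA: "shr (xs!0) (xs!2) \<and> ((fst (xs!0) = fst (xs!2)) = (fst (xs!0) = fst (xs!1)))"
  proof (cases "fst (xs!0) = fst (xs!1)")
    case True thus ?thesis using ty unfolding shr_def by simp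
  next
    case False
    hence "snd (xs!0) = snd (xs!1)" "snd (xs!1) = snd (xs!2)" using s01 s12 ty unfolding shr_def by auto
    hence "snd (xs!0) = snd (xs!2)" by simp
    hence "fst (xs!0) \<noteq> fst (xs!2)" using ne02 by (metis prod.expand)
    thus ?thesis using False \<open>snd (xs!0) = snd (xs!2)\<close> unfolding shr_def by simp
  qed
  have L4: "4 \<le> ?L"
  proof (rule ccontr)
    assume "\<not> 4 \<le> ?L" hence L: "?L = 3" using L3 by simp
    have n2: "nxt xs 2 = xs!0" using L unfolding nxt_def by simp
    obtain t where t: "t < ?L" "(fst (xs!t) = fst (nxt xs t)) \<noteq> (fst (xs!0) = fst (xs!1))"
      using g unfolding good_def by (cases "fst (xs!0) = fst (xs!1)") auto
    have "t \<noteq> 0" proof assume "t = 0" thus False using t n0 by simp qed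
    moreover have "t \<noteq> 1" proof assume "t = 1" thus False using t n1 ty by simp qed
    ultimately have "t = 2" using t L by auto
    thus False using t n2 claimA by auto
  qed
  have lz: "length ?zs = ?L - 1" using L4 by simp
  have zi: "?zs ! i = xs ! (i+1)" if "0 < i" for i using that L3 by (cases i) (auto simp: nth_drop)
  have znx: "nxt ?zs i = xs ! ((i + 2) mod ?L)" if "0 < i" "i < ?L - 1" for i
  proof (cases "i + 1 < ?L - 1")
    case True
    hence "nxt ?zs i = ?zs ! (i+1)" unfolding nxt_def by simp
    thus ?thesis using zi[of "i+1"] True by simp
  next
    case False
    hence "i + 1 = ?L - 1" using that by simp
    hence "(i + 1) mod length ?zs = 0" using lz by simp
    hence "nxt ?zs i = ?zs ! 0" unfolding nxt_def by simp
    moreover have "i + 2 = ?L" using \<open>i + 1 = ?L - 1\<close> L4 by simp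
    hence "(i + 2) mod ?L = 0" by simp
    ultimately show ?thesis by simp
  qed
  have nz0: "nxt ?zs 0 = xs ! 2" using L4 unfolding nxt_def by simp
  have link: "?zs ! i = xs ! (i+1) \<and> nxt ?zs i = nxt xs (i+1)" if "0 < i" "i < ?L - 1" for i
    using zi[OF that(1)] znx[OF that] unfolding nxt_def by (simp add: add.assoc)
  show ?thesis unfolding good_def lz
  proof (intro conjI)
    show "3 \<le> ?L - 1" using L4 by simp
    show "distinct ?zs"
    proof -
      have "xs = xs!0 # xs!1 # drop 2 xs" using L3
        by (metis Cons_nth_drop_Suc One_nat_def Suc_1 Suc_le_lessD numeral_3_eq_3 order_less_le_trans zero_less_Suc less_imp_le_nat drop_0)
      thus ?thesis using dist by (metis distinct.simps(2) list.set_intros(2))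
    qed
    show "\<forall>x\<in>set ?zs. cg_vertex k l M x"
    proof -
      have "xs!0 \<in> set xs" using L3 by (intro nth_mem) linarith
      thus ?thesis using g unfolding good_def by (auto dest: in_set_dropD)
    qed
    show "\<forall>t<?L - 1. shr (?zs!t) (nxt ?zs t)"
    proof (intro allI impI)
      fix t assume t: "t < ?L - 1"
      show "shr (?zs!t) (nxt ?zs t)"
      proof (cases "t = 0")
        case True thus ?thesis using claimA nz0 by simp
      next
        case False thus ?thesis using link[of t] t sh by auto
      qed
    qed
    show "\<exists>t<?L - 1. fst (?zs!t) = fst (nxt ?zs t)"
    proof (cases "fst (xs!0) = fst (xs!1)")
      case True thus ?thesis using claimA nz0 L4 by (intro exI[of _ 0]) auto
    next
      case False
      obtain t where t: "t < ?L" "fst (xs!t) = fst (nxt xs t)" using g unfolding good_def by blast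
      have "t \<noteq> 0" proof assume "t = 0" thus False using t n0 False by simp qed
      moreover have "t \<noteq> 1" proof assume "t = 1" thus False using t n1 ty False by simp qed
      ultimately have "0 < t - 1" "t - 1 < ?L - 1" using t by auto
      thus ?thesis using link[of "t-1"] t by (intro exI[of _ "t-1"]) auto
    qed
    show "\<exists>t<?L - 1. fst (?zs!t) \<noteq> fst (nxt ?zs t)"
    proof (cases "fst (xs!0) = fst (xs!1)")
      case False thus ?thesis using claimA nz0 L4 by (intro exI[of _ 0]) auto
    next
      case True
      obtain t where t: "t < ?L" "fst (xs!t) \<noteq> fst (nxt xs t)" using g unfolding good_def by blast
      have "t \<noteq> 0" proof assume "t = 0" thus False using t n0 True by simp qed
      moreover have "t \<noteq> 1" proof assume "t = 1" thus False using t n1 ty True by simp qed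
      ultimately have "0 < t - 1" "t - 1 < ?L - 1" using t by auto
      thus ?thesis using link[of "t-1"] t by (intro exI[of _ "t-1"]) auto
    qed
  qed
qed


definition alt :: "(nat \<times> nat) list \<Rightarrow> bool" where
  "alt ys \<longleftrightarrow> (\<forall>t<length ys. (fst (ys!t) = fst (nxt ys t)) \<noteq> (fst (nxt ys t) = fst (nxt ys ((t+1) mod length ys))))"

lemma reduce: "good k l M xs \<Longrightarrow> \<exists>ys. good k l M ys \<and> alt ys"
proof (induction "length xs" arbitrary: xs rule: less_induct)
  case less
  show ?case
  proof (cases "alt xs")
    case True thus ?thesis using less.prems by blast
  next
    case False
    then obtain t where t: "t < length xs" "(fst (xs!t) = fst (nxt xs t)) = (fst (nxt xs t) = fst (nxt xs ((t+1) mod length xs)))"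
      unfolding alt_def by blast
    let ?L = "length xs"
    let ?zs = "rotate t xs"
    have L3: "3 \<le> ?L" using less.prems unfolding good_def by simp
    have gz: "good k l M ?zs" using good_rotate[OF less.prems t(1)] .
    have "xs \<noteq> []" using t(1) by (cases xs) auto
    hence z0: "?zs!0 = xs!t" using rot_nth[of 0 xs t] t(1) by simp
    have z1: "?zs!1 = nxt xs t" using rot_nth[of 1 xs t] L3 unfolding nxt_def by simp
    have "?zs!2 = xs!((t+2) mod ?L)" using rot_nth[of 2 xs t] L3 by (simp add: add.commute)
    moreover have "nxt xs ((t+1) mod ?L) = xs!((t+2) mod ?L)"
      unfolding nxt_def using mod_Suc_eq[of "t+1" ?L] by simp
    ultimately have z2: "?zs!2 = nxt xs ((t+1) mod ?L)" by simp
    have "good k l M (?zs!0 # drop 2 ?zs)"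
      by (rule step0[OF gz]) (use t(2) z0 z1 z2 in simp)
    moreover have "length (?zs!0 # drop 2 ?zs) < ?L" using L3 by simp
    ultimately show ?thesis using less.hyps by blast
  qed
qed

definition turns :: "nat \<Rightarrow> nat \<Rightarrow> (nat \<Rightarrow> nat \<Rightarrow> cell) \<Rightarrow> nat \<Rightarrow> (nat \<Rightarrow> nat \<times> nat) \<Rightarrow> bool" where
  "turns k l M r T \<longleftrightarrow> 1 \<le> r \<and> (\<forall>t<2*r. cg_vertex k l M (T t)) \<and> inj_on T {..<2*r} \<and>
     (\<forall>j<r. fst (T (2*j)) = fst (T (2*j+1))) \<and> (\<forall>j<r. snd (T (2*j+1)) = snd (T ((2*j+2) mod (2*r))))"

lemma alt_parity:
  assumes g: "good k l M xs" and a: "alt xs"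
  shows "even (length xs)" "\<forall>t<length xs. (fst (xs!t) = fst (nxt xs t)) = (even t = (fst (xs!0) = fst (nxt xs 0)))"
proof -
  let ?L = "length xs"
  define ty where "ty t = (fst (xs!t) = fst (nxt xs t))" for t
  have nx: "nxt xs t = xs!((t+1) mod ?L)" for t unfolding nxt_def by simp
  have step: "ty ((t+1) mod ?L) \<noteq> ty t" if "t < ?L" for t
    using a that unfolding alt_def ty_def nx by auto
  have L3: "3 \<le> ?L" using g unfolding good_def by simp
  have par: "ty t = (even t = ty 0)" if "t < ?L" for t
    using that
  proof (induction t)
    case 0 thus ?case by simp
  next
    case (Suc t)
    hence "ty (Suc t) \<noteq> ty t" using step[of t] by simp
    thus ?case using Suc by auto
  qed
  show "\<forall>t<?L. (fst (xs!t) = fst (nxt xs t)) = (even t = (fst (xs!0) = fst (nxt xs 0)))"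
    using par unfolding ty_def by simp
  have sL: "Suc (?L - 1) = ?L" using L3 by linarith
  have "ty 0 \<noteq> ty (?L - 1)" using step[of "?L - 1"] L3 sL by simp
  moreover have "ty (?L - 1) = (even (?L - 1) = ty 0)" using par[of "?L - 1"] L3 by simp
  ultimately have "odd (?L - 1)" by auto
  thus "even ?L" using sL by (metis even_Suc)
qed

lemma final:
  assumes g: "good k l M xs" and a: "alt xs"
  shows "\<exists>r T. turns k l M r T"
proof -
  let ?L = "length xs"
  have L3: "3 \<le> ?L" using g unfolding good_def by simp
  have evL: "even ?L" and par: "\<forall>t<?L. (fst (xs!t) = fst (nxt xs t)) = (even t = (fst (xs!0) = fst (nxt xs 0)))"
    using alt_parity[OF g a] by auto
  define ys where "ys = (if fst (xs!0) = fst (nxt xs 0) then xs else rotate 1 xs)"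
  have gy: "good k l M ys" unfolding ys_def using good_rotate[OF g, of 1] g L3 by auto
  have ly: "length ys = ?L" unfolding ys_def by simp
  have tyy: "(fst (ys!t) = fst (nxt ys t)) = even t" if t: "t < ?L" for t
  proof (cases "fst (xs!0) = fst (nxt xs 0)")
    case True thus ?thesis using par t unfolding ys_def by simp
  next
    case False
    have e: "ys!t = xs!((1+t) mod ?L)" "nxt ys t = nxt xs ((1+t) mod ?L)"
      using False rot_nth[OF t, of 1] rot_nxt[OF t, of 1] unfolding ys_def by auto
    show ?thesis
    proof (cases "t + 1 < ?L")
      case True
      hence "(1+t) mod ?L = t+1" by simp
      thus ?thesis using e par True False by simp
    next
      case F2: False
      hence "t = ?L - 1" using t by simp
      hence "1 + t = ?L" using L3 by linarith
      hence "(1+t) mod ?L = 0" by simp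
      moreover have "odd t" using \<open>1 + t = ?L\<close> evL by (metis even_add odd_one)
      ultimately show ?thesis using e False by simp
    qed
  qed
  define r where "r = ?L div 2"
  have L2r: "2 * r = ?L" unfolding r_def using evL by simp
  have dy: "distinct ys" and sy: "\<forall>t<?L. shr (ys!t) (nxt ys t)" and vy: "\<forall>x\<in>set ys. cg_vertex k l M x"
    using gy ly unfolding good_def by auto
  have "turns k l M r ((!) ys)"
    unfolding turns_def
  proof (intro conjI)
    show "1 \<le> r" using L3 L2r by simp
    show "\<forall>t<2*r. cg_vertex k l M (ys!t)" using vy ly L2r by simp
    show "inj_on ((!) ys) {..<2*r}" using dy ly L2r by (intro inj_on_nth) auto
    show "\<forall>j<r. fst (ys!(2*j)) = fst (ys!(2*j+1))"
    proof (intro allI impI)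
      fix j assume j: "j < r"
      hence "fst (ys!(2*j)) = fst (nxt ys (2*j))" using tyy[of "2*j"] L2r by simp
      moreover have "nxt ys (2*j) = ys!(2*j+1)" unfolding nxt_def using ly L2r j by simp
      ultimately show "fst (ys!(2*j)) = fst (ys!(2*j+1))" by simp
    qed
    show "\<forall>j<r. snd (ys!(2*j+1)) = snd (ys!((2*j+2) mod (2*r)))"
    proof (intro allI impI)
      fix j assume j: "j < r"
      hence "fst (ys!(2*j+1)) \<noteq> fst (nxt ys (2*j+1))" using tyy[of "2*j+1"] L2r by simp
      moreover have "shr (ys!(2*j+1)) (nxt ys (2*j+1))" using sy j L2r by simp
      ultimately have "snd (ys!(2*j+1)) = snd (nxt ys (2*j+1))" unfolding shr_def by simp
      moreover have "nxt ys (2*j+1) = ys!((2*j+2) mod (2*r))" unfolding nxt_def using ly L2r by simp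
      ultimately show "snd (ys!(2*j+1)) = snd (ys!((2*j+2) mod (2*r)))" by simp
    qed
  qed
  thus ?thesis by blast
qed


lemma no_line:
  fixes cs :: "(nat \<times> nat) list" and f g :: "nat \<times> nat \<Rightarrow> nat" and V :: "nat \<Rightarrow> nat \<Rightarrow> bool"
  assumes L3: "3 \<le> length cs" and dist: "distinct cs"
    and fe: "\<forall>t<length cs. f (cs!t) = f (cs!((t+1) mod length cs))"
    and fg: "\<And>a b. f a = f b \<Longrightarrow> g a = g b \<Longrightarrow> a = b"
    and adj: "\<forall>t<length cs. \<forall>j. min (g (cs!t)) (g (cs!((t+1) mod length cs))) < j \<and>
                 j < max (g (cs!t)) (g (cs!((t+1) mod length cs))) \<longrightarrow> \<not> V (f (cs!t)) j"
    and vx: "\<forall>x\<in>set cs. V (f x) (g x)"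
  shows False
proof -
  let ?L = "length cs"
  have sL: "Suc (?L - 1) = ?L" using L3 by linarith
  have fall: "f (cs!t) = f (cs!0)" if "t < ?L" for t
    using that
  proof (induction t)
    case 0 show ?case by simp
  next
    case (Suc t)
    hence "f (cs!t) = f (cs!((t+1) mod ?L))" using fe by simp
    moreover have "(t+1) mod ?L = Suc t" using Suc.prems by simp
    ultimately show ?case using Suc by simp
  qed
  have ne: "set cs \<noteq> {}" using L3 by (cases cs) auto
  let ?m = "Max (g ` set cs)"
  have "?m \<in> g ` set cs" using ne by (intro Max_in) auto
  then obtain t where t: "t < ?L" "g (cs!t) = ?m" by (metis imageE in_set_conv_nth)
  have gmax: "g (cs!u) \<le> g (cs!t)" if "u < ?L" for u using t that by simp
  define p where "p = (if t = 0 then ?L - 1 else t - 1)"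
  define q where "q = (if t = ?L - 1 then 0 else t + 1)"
  have p: "p < ?L" "(p + 1) mod ?L = t" "p \<noteq> t" using t L3 sL unfolding p_def by auto
  have q: "q < ?L" "(t + 1) mod ?L = q" "q \<noteq> t" using t L3 sL unfolding q_def by auto
  have pq: "p \<noteq> q" using t L3 sL unfolding p_def q_def by auto
  have neq: "cs!i \<noteq> cs!j" if "i < ?L" "j < ?L" "i \<noteq> j" for i j
    using dist that by (simp add: nth_eq_iff_index_eq)
  have gne: "g (cs!i) \<noteq> g (cs!j)" if "i < ?L" "j < ?L" "i \<noteq> j" for i j
    using fg[of "cs!i" "cs!j"] neq[OF that] fall that by auto
  have ga: "g (cs!p) < g (cs!t)" using gmax[OF p(1)] gne[OF p(1) t(1) p(3)] by simp
  have gb: "g (cs!q) < g (cs!t)" using gmax[OF q(1)] gne[OF q(1) t(1) q(3)] by simp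
  have gab: "g (cs!p) \<noteq> g (cs!q)" using gne[OF p(1) q(1) pq] .
  have vin: "V (f (cs!i)) (g (cs!i))" if "i < ?L" for i using vx that by simp
  show False
  proof (cases "g (cs!p) < g (cs!q)")
    case True
    have "\<not> V (f (cs!p)) (g (cs!q))"
      using adj p(1) p(2) ga gb True by (auto simp: min_def max_def split: if_splits)
    thus False using vin[OF q(1)] fall[OF q(1)] fall[OF p(1)] by simp
  next
    case False
    hence F: "g (cs!q) < g (cs!p)" using gab by simp
    have "\<not> V (f (cs!t)) (g (cs!p))"
      using adj t(1) q(2) ga gb F by (auto simp: min_def max_def split: if_splits)
    thus False using vin[OF p(1)] fall[OF t(1)] fall[OF p(1)] by simp
  qed
qed

lemma init_good:
  assumes "cg_has_cycle k l M"
  shows "\<exists>xs. good k l M xs"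
proof -
  obtain cs where cs: "length cs \<ge> 3" "distinct cs"
    "\<forall>t < length cs. cg_adj k l M (cs ! t) (cs ! ((t + 1) mod length cs))"
    using assms unfolding cg_has_cycle_def by blast
  let ?L = "length cs"
  have vx: "\<forall>x\<in>set cs. cg_vertex k l M x"
  proof
    fix x assume "x \<in> set cs"
    then obtain t where "t < ?L" "x = cs!t" by (metis in_set_conv_nth)
    thus "cg_vertex k l M x" using cs(3) unfolding cg_adj_def by blast
  qed
  have sh: "\<forall>t<?L. shr (cs!t) (nxt cs t)"
    using cs(3) unfolding cg_adj_def shr_def nxt_def by blast
  have e1: "\<exists>t<?L. fst (cs!t) = fst (nxt cs t)"
  proof (rule ccontr)
    assume "\<not> ?thesis"
    hence A: "\<forall>t<?L. fst (cs!t) \<noteq> fst (cs!((t+1) mod ?L))" unfolding nxt_def by simp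
    have adj2: "\<forall>t<?L. snd (cs!t) = snd (cs!((t+1) mod ?L)) \<and> (\<forall>i. min (fst (cs!t)) (fst (cs!((t+1) mod ?L))) < i \<and>
                 i < max (fst (cs!t)) (fst (cs!((t+1) mod ?L))) \<longrightarrow> M i (snd (cs!t)) = Emp)"
      using cs(3) A unfolding cg_adj_def by blast
    show False
      apply (rule no_line[of cs snd fst "\<lambda>i j. M j i \<noteq> Emp"])
      using cs(1,2) adj2 vx by (auto simp: cg_vertex_def prod_eq_iff)
  qed
  have e2: "\<exists>t<?L. fst (cs!t) \<noteq> fst (nxt cs t)"
  proof (rule ccontr)
    assume "\<not> ?thesis"
    hence A: "\<forall>t<?L. fst (cs!t) = fst (cs!((t+1) mod ?L))" unfolding nxt_def by simp
    have adj2: "\<forall>t<?L. (\<forall>j. min (snd (cs!t)) (snd (cs!((t+1) mod ?L))) < j \<and>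
                 j < max (snd (cs!t)) (snd (cs!((t+1) mod ?L))) \<longrightarrow> M (fst (cs!t)) j = Emp)"
    proof (rule allI, rule impI)
      fix t assume t: "t < ?L"
      have "(t+1) mod ?L < ?L" using t by (intro mod_less_divisor) linarith
      moreover have "t \<noteq> (t+1) mod ?L"
      proof (cases "t + 1 < ?L")
        case True thus ?thesis by simp
      next
        case False hence "t + 1 = ?L" using t by simp
        thus ?thesis using cs(1) by simp
      qed
      ultimately have "cs!t \<noteq> cs!((t+1) mod ?L)" using cs(2) t by (simp add: nth_eq_iff_index_eq)
      hence "snd (cs!t) \<noteq> snd (cs!((t+1) mod ?L))" using A t by (auto simp: prod_eq_iff)
      thus "\<forall>j. min (snd (cs!t)) (snd (cs!((t+1) mod ?L))) < j \<and>
                 j < max (snd (cs!t)) (snd (cs!((t+1) mod ?L))) \<longrightarrow> M (fst (cs!t)) j = Emp"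
        using cs(3) t unfolding cg_adj_def by auto
    qed
    show False
      apply (rule no_line[of cs fst snd "\<lambda>i j. M i j \<noteq> Emp"])
      using cs(1,2) A adj2 vx by (auto simp: cg_vertex_def prod_eq_iff)
  qed
  have "good k l M cs" unfolding good_def using cs(1,2) vx sh e1 e2 by blast
  thus ?thesis by blast
qed

lemma cycle_turns: "cg_has_cycle k l M \<Longrightarrow> \<exists>r T. turns k l M r T"
  using init_good reduce final by blast


locale constr =
  fixes k l :: nat and M :: "nat \<Rightarrow> nat \<Rightarrow> cell" and r :: nat and T :: "nat \<Rightarrow> nat \<times> nat" and s :: nat
  assumes tr: "turns k l M r T" and s_pos: "1 \<le> s"
begin

definition d :: "nat \<Rightarrow> nat" where "d t = (if M (fst (T t)) (snd (T t)) = Dec then 1 else 0)"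
definition DD :: nat where "DD = (\<Sum>t<2*r. d t)"
definition cc :: nat where "cc = DD mod 2"
definition PP :: nat where "PP = (cc+1)*s"
definition JJ :: nat where "JJ = 2*PP+1"
definition NN :: nat where "NN = (JJ+2)*PP"
definition Rp :: "nat \<Rightarrow> nat \<Rightarrow> nat" where "Rp e i = (if odd e then 2*NN+1-i else i)"
definition EE :: "nat \<Rightarrow> nat" where "EE t = (\<Sum>u\<in>{1..2*(t div 2)}. d u)"
definition psi' :: "nat \<Rightarrow> nat" where "psi' q = (if q \<le> NN then q else q + 2*s)"
definition B2 :: nat where "B2 = 16*NN"
definition B1 :: nat where "B1 = (r+1)*B2"
definition kx :: "nat \<times> nat \<Rightarrow> nat" where
  "kx p = fst (T (fst p))*B1 + (fst p div 2)*B2 + 2*snd p + fst p mod 2"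
definition lk :: "nat \<Rightarrow> nat" where "lk t = (if t = 0 then r - 1 else (t-1) div 2)"
definition ysub :: "nat \<Rightarrow> nat \<Rightarrow> nat" where
  "ysub t i = (if odd t then (if t = 2*r-1 then 2*(Rp (d t) i + s) else 2*Rp (d t) i)
              else (if t = 0 then 2*psi' (Rp (d t) i) + 1 else 2*Rp (d t) i + 1))"
definition ky :: "nat \<times> nat \<Rightarrow> nat" where
  "ky p = snd (T (fst p))*B1 + lk (fst p)*B2 + ysub (fst p) (snd p)"
definition Pts :: "(nat \<times> nat) set" where "Pts = {..<2*r} \<times> {1..2*NN}"
definition pos where "pos = rk kx Pts"
definition val where "val = rk ky Pts"
definition nn :: nat where "nn = card Pts"
definition perm :: "nat \<Rightarrow> nat" where "perm m = val (inv_into Pts pos m)"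

lemma r_pos: "1 \<le> r" using tr unfolding turns_def by simp
lemma d01: "d t \<le> 1" unfolding d_def by simp
lemma cc01: "cc \<le> 1" unfolding cc_def by simp
lemma PP_ge: "s \<le> PP" unfolding PP_def by simp
lemma NN_ge: "3*s \<le> NN" "1 \<le> NN" "2*PP+2 \<le> NN"
proof -
  have "3 * PP \<le> NN" unfolding NN_def JJ_def by simp
  moreover have "2*PP + 2 \<le> (JJ+2)*PP"
  proof -
    have p1: "1 \<le> PP" using PP_ge s_pos by simp
    hence a: "PP \<le> PP*PP" by simp
    have "(JJ+2)*PP = 2*(PP*PP) + 3*PP" unfolding JJ_def by (simp add: algebra_simps)
    thus ?thesis using a p1 by linarith
  qed
  ultimately have a: "3 * PP \<le> NN" "2*PP+2 \<le> NN" unfolding NN_def by auto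
  thus "3*s \<le> NN" "1 \<le> NN" "2*PP+2 \<le> NN" using PP_ge s_pos by linarith+
qed

lemma Rp_range: "i \<in> {1..2*NN} \<Longrightarrow> Rp e i \<in> {1..2*NN}" unfolding Rp_def by auto
lemma Rp_comp: "i \<le> 2*NN \<Longrightarrow> Rp a (Rp b i) = Rp (a+b) i" unfolding Rp_def by auto
lemma Rp_even: "even e \<Longrightarrow> Rp e i = i" unfolding Rp_def by simp
lemma Rp_mono_even: "even e \<Longrightarrow> i < i' \<Longrightarrow> Rp e i < Rp e i'" unfolding Rp_def by simp
lemma Rp_mono_odd: "odd e \<Longrightarrow> i < i' \<Longrightarrow> i' \<le> 2*NN \<Longrightarrow> Rp e i' < Rp e i" unfolding Rp_def by simp
lemma Rp_inj: "i \<le> 2*NN \<Longrightarrow> i' \<le> 2*NN \<Longrightarrow> Rp e i = Rp e i' \<Longrightarrow> i = i'" unfolding Rp_def by (auto split: if_splits)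
lemma psi'_mono: "q < q' \<Longrightarrow> psi' q < psi' q'" unfolding psi'_def by auto

lemma fin_Pts: "finite Pts" unfolding Pts_def by simp

lemma T_vert: "t < 2*r \<Longrightarrow> cg_vertex k l M (T t)" using tr unfolding turns_def by simp
lemma T_inj: "inj_on T {..<2*r}" using tr unfolding turns_def by simp
lemma T_col: "j < r \<Longrightarrow> fst (T (2*j)) = fst (T (2*j+1))" using tr unfolding turns_def by simp
lemma T_row: "j < r \<Longrightarrow> snd (T (2*j+1)) = snd (T ((2*j+2) mod (2*r)))" using tr unfolding turns_def by simp

lemma kx_sub: "p \<in> Pts \<Longrightarrow> (fst p div 2)*B2 + 2*snd p + fst p mod 2 < B1"
proof -
  assume p: "p \<in> Pts"
  hence "fst p div 2 \<le> r - 1" unfolding Pts_def by auto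
  hence "(fst p div 2)*B2 \<le> (r-1)*B2" by simp
  moreover have "2*snd p + fst p mod 2 < B2" using p NN_ge unfolding Pts_def B2_def by auto
  ultimately have "(fst p div 2)*B2 + 2*snd p + fst p mod 2 < (r-1)*B2 + B2" by linarith
  also have "\<dots> = r * B2" using r_pos by (cases r) auto
  also have "\<dots> \<le> B1" unfolding B1_def by simp
  finally show ?thesis .
qed

lemma ysub_bound: "i \<in> {1..2*NN} \<Longrightarrow> ysub t i < B2"
proof -
  assume i: "i \<in> {1..2*NN}"
  have "Rp (d t) i \<le> 2*NN" using Rp_range[OF i] by simp
  hence "psi' (Rp (d t) i) \<le> 2*NN + 2*s" unfolding psi'_def by auto
  thus ?thesis using \<open>Rp (d t) i \<le> 2*NN\<close> NN_ge unfolding ysub_def B2_def by auto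
qed

lemma lk_le: "t < 2*r \<Longrightarrow> lk t \<le> r - 1" unfolding lk_def by auto

lemma ky_sub: "p \<in> Pts \<Longrightarrow> lk (fst p)*B2 + ysub (fst p) (snd p) < B1"
proof -
  assume p: "p \<in> Pts"
  hence "lk (fst p)*B2 \<le> (r-1)*B2" using lk_le unfolding Pts_def by auto
  moreover have "ysub (fst p) (snd p) < B2" using p ysub_bound unfolding Pts_def by auto
  ultimately have "lk (fst p)*B2 + ysub (fst p) (snd p) < (r-1)*B2 + B2" by linarith
  also have "\<dots> = r * B2" using r_pos by (cases r) auto
  also have "\<dots> \<le> B1" unfolding B1_def by simp
  finally show ?thesis .
qed

lemma kx_col: "p \<in> Pts \<Longrightarrow> (c*B1 \<le> kx p \<and> kx p < (c+1)*B1) \<longleftrightarrow> fst (T (fst p)) = c"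
proof -
  assume p: "p \<in> Pts"
  define a where "a = fst (T (fst p))"
  define b where "b = (fst p div 2)*B2 + 2*snd p + fst p mod 2"
  have kb: "kx p = a*B1 + b" "b < B1" using kx_sub[OF p] unfolding kx_def a_def b_def by auto
  show ?thesis
  proof
    assume h: "c*B1 \<le> kx p \<and> kx p < (c+1)*B1"
    have "c \<le> a"
    proof (rule ccontr)
      assume "\<not> c \<le> a" hence "(a+1)*B1 \<le> c*B1" by (intro mult_right_mono) auto
      thus False using h kb by (simp add: algebra_simps)
    qed
    moreover have "a \<le> c"
    proof (rule ccontr)
      assume "\<not> a \<le> c" hence "(c+1)*B1 \<le> a*B1" by (intro mult_right_mono) auto
      thus False using h kb by (simp add: algebra_simps)
    qed
    ultimately show "fst (T (fst p)) = c" unfolding a_def by simp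
  qed (use kb a_def in \<open>auto simp: algebra_simps\<close>)
qed

lemma ky_row: "p \<in> Pts \<Longrightarrow> (c*B1 \<le> ky p \<and> ky p < (c+1)*B1) \<longleftrightarrow> snd (T (fst p)) = c"
proof -
  assume p: "p \<in> Pts"
  define a where "a = snd (T (fst p))"
  define b where "b = lk (fst p)*B2 + ysub (fst p) (snd p)"
  have kb: "ky p = a*B1 + b" "b < B1" using ky_sub[OF p] unfolding ky_def a_def b_def by auto
  show ?thesis
  proof
    assume h: "c*B1 \<le> ky p \<and> ky p < (c+1)*B1"
    have "c \<le> a"
    proof (rule ccontr)
      assume "\<not> c \<le> a" hence "(a+1)*B1 \<le> c*B1" by (intro mult_right_mono) auto
      thus False using h kb by (simp add: algebra_simps)
    qed
    moreover have "a \<le> c"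
    proof (rule ccontr)
      assume "\<not> a \<le> c" hence "(c+1)*B1 \<le> a*B1" by (intro mult_right_mono) auto
      thus False using h kb by (simp add: algebra_simps)
    qed
    ultimately show "snd (T (fst p)) = c" unfolding a_def by simp
  qed (use kb a_def in \<open>auto simp: algebra_simps\<close>)
qed

end

context constr begin

lemma decomp: "b < B \<Longrightarrow> (a*B + b) div B = a \<and> (a*B + b) mod B = (b::nat)"
  by auto

lemma kx_parts: "p \<in> Pts \<Longrightarrow> kx p div B1 = fst (T (fst p)) \<and> kx p mod B1 div B2 = fst p div 2 \<and> kx p mod B1 mod B2 = 2*snd p + fst p mod 2"
proof -
  assume p: "p \<in> Pts"
  have b1: "(fst p div 2)*B2 + 2*snd p + fst p mod 2 < B1" using kx_sub[OF p] .
  have b2: "2*snd p + fst p mod 2 < B2" using p NN_ge unfolding Pts_def B2_def by auto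
  have "kx p = fst (T (fst p))*B1 + ((fst p div 2)*B2 + (2*snd p + fst p mod 2))" unfolding kx_def by simp
  thus ?thesis using decomp[OF b1[unfolded add.assoc]] decomp[OF b2] by simp
qed

lemma mod_aux1: "(2 * a + b mod 2) mod 2 = (b::nat) mod 2" by simp
lemma mod_aux2: "(a::nat) div 2 = b div 2 \<Longrightarrow> a mod 2 = b mod 2 \<Longrightarrow> a = b" by (metis div_mult_mod_eq)
lemma mod_aux3: "2 * (a::nat) + b mod 2 = 2 * x + y mod 2 \<Longrightarrow> b mod 2 = y mod 2"
  by (metis mod_aux1)

lemma kx_inj: "inj_on kx Pts"
proof (rule inj_onI)
  fix p q assume p: "p \<in> Pts" and q: "q \<in> Pts" and e: "kx p = kx q"
  have "fst p div 2 = fst q div 2" "2*snd p + fst p mod 2 = 2*snd q + fst q mod 2"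
    using kx_parts[OF p] kx_parts[OF q] e by auto
  hence m: "fst p mod 2 = fst q mod 2" by (intro mod_aux3)
  hence "snd p = snd q" using \<open>2*snd p + fst p mod 2 = 2*snd q + fst q mod 2\<close> by simp
  have "fst p = fst q" using \<open>fst p div 2 = fst q div 2\<close> m by (rule mod_aux2)
  thus "p = q" using \<open>snd p = snd q\<close> by (simp add: prod_eq_iff)
qed

lemma ysub_mono:
  assumes i: "i < i'" "i' \<le> 2*NN"
  shows "(d t = 0 \<longrightarrow> ysub t i < ysub t i') \<and> (d t = 1 \<longrightarrow> ysub t i' < ysub t i)"
proof -
  have m0: "d t = 0 \<Longrightarrow> Rp (d t) i < Rp (d t) i'" using Rp_mono_even i by simp
  have m1: "d t = 1 \<Longrightarrow> Rp (d t) i' < Rp (d t) i" using Rp_mono_odd i by simp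
  show ?thesis using m0 m1 psi'_mono unfolding ysub_def by auto
qed

lemma ysub_inj: "i \<in> {1..2*NN} \<Longrightarrow> i' \<in> {1..2*NN} \<Longrightarrow> ysub t i = ysub t i' \<Longrightarrow> i = i'"
proof (rule ccontr)
  assume a: "i \<in> {1..2*NN}" "i' \<in> {1..2*NN}" "ysub t i = ysub t i'" "i \<noteq> i'"
  have d: "d t = 0 \<or> d t = 1" using d01[of t] by auto
  show False
  proof (cases "i < i'")
    case True thus False using ysub_mono[of i i' t] a d by auto
  next
    case False hence "i' < i" using a by simp
    thus False using ysub_mono[of i' i t] a d by auto
  qed
qed

lemma ysub_par: "odd (ysub t i) \<longleftrightarrow> even t" unfolding ysub_def by auto

lemma ky_parts: "p \<in> Pts \<Longrightarrow> ky p div B1 = snd (T (fst p)) \<and> ky p mod B1 div B2 = lk (fst p) \<and> ky p mod B1 mod B2 = ysub (fst p) (snd p)"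
proof -
  assume p: "p \<in> Pts"
  have b1: "lk (fst p)*B2 + ysub (fst p) (snd p) < B1" using ky_sub[OF p] .
  have b2: "ysub (fst p) (snd p) < B2" using p ysub_bound unfolding Pts_def by auto
  have "ky p = snd (T (fst p))*B1 + (lk (fst p)*B2 + ysub (fst p) (snd p))" unfolding ky_def by simp
  thus ?thesis using decomp[OF b1] decomp[OF b2] by simp
qed

lemma div_aux: "(2*m - 1) div 2 = m - (1::nat)" by (cases m) auto
lemma div_aux2: "(2*m + 1 - 1) div 2 = (m::nat)" by simp

lemma lk_inj: "t < 2*r \<Longrightarrow> t' < 2*r \<Longrightarrow> t mod 2 = t' mod 2 \<Longrightarrow> lk t = lk t' \<Longrightarrow> t = t'"
proof -
  assume a: "t < 2*r" "t' < 2*r" "t mod 2 = t' mod 2" "lk t = lk t'"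
  show "t = t'"
  proof (cases "odd t")
    case True
    hence "odd t'" using a(3) by (simp add: odd_iff_mod_2_eq_one)
    obtain m where m: "t = 2*m+1" using True by (metis oddE)
    obtain m' where m': "t' = 2*m'+1" using \<open>odd t'\<close> by (metis oddE)
    have "m = m'" using a(4) unfolding lk_def m m' by simp
    thus ?thesis using m m' by simp
  next
    case False
    hence ev: "even t'" using a(3) by (simp add: even_iff_mod_2_eq_zero)
    obtain m where m: "t = 2*m" using False by (metis evenE)
    obtain m' where m': "t' = 2*m'" using ev by (metis evenE)
    have mr: "m < r" "m' < r" using a(1,2) m m' by auto
    show ?thesis
    proof (cases "m = 0 \<or> m' = 0")
      case True
      thus ?thesis
      proof
        assume t0: "m = 0"
        show ?thesis
        proof (rule ccontr)
          assume "t \<noteq> t'" hence "m' \<noteq> 0" using t0 m m' by simp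
          hence "r - 1 = m' - 1" using a(4) t0 m m' div_aux[of m'] unfolding lk_def by simp
          thus False using \<open>m' \<noteq> 0\<close> mr r_pos by simp
        qed
      next
        assume t0: "m' = 0"
        show ?thesis
        proof (rule ccontr)
          assume "t \<noteq> t'" hence "m \<noteq> 0" using t0 m m' by simp
          hence "r - 1 = m - 1" using a(4) t0 m m' div_aux[of m] unfolding lk_def by simp
          thus False using \<open>m \<noteq> 0\<close> mr r_pos by simp
        qed
      qed
    next
      case F2: False
      hence "m - 1 = m' - 1" using a(4) m m' div_aux[of m] div_aux[of m'] unfolding lk_def by simp
      thus ?thesis using F2 m m' by linarith
    qed
  qed
qed

lemma ky_inj: "inj_on ky Pts"
proof (rule inj_onI)
  fix p q assume p: "p \<in> Pts" and q: "q \<in> Pts" and e: "ky p = ky q"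
  have l: "lk (fst p) = lk (fst q)" and y: "ysub (fst p) (snd p) = ysub (fst q) (snd q)"
    using ky_parts[OF p] ky_parts[OF q] e by auto
  have "even (fst p) = even (fst q)" using ysub_par[of "fst p" "snd p"] ysub_par[of "fst q" "snd q"] y by simp
  hence "fst p mod 2 = fst q mod 2"
    by (cases "even (fst p)") (auto simp: even_iff_mod_2_eq_zero odd_iff_mod_2_eq_one)
  hence t: "fst p = fst q" using lk_inj l p q unfolding Pts_def by auto
  have "snd p = snd q" using ysub_inj y t p q unfolding Pts_def by auto
  thus "p = q" using t by (simp add: prod_eq_iff)
qed

end

context constr begin

lemma pos_bij: "bij_betw pos Pts {1..nn}" unfolding pos_def nn_def by (rule rk_bij[OF fin_Pts kx_inj])
lemma val_bij: "bij_betw val Pts {1..nn}" unfolding val_def nn_def by (rule rk_bij[OF fin_Pts ky_inj])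
lemma pos_less: "p \<in> Pts \<Longrightarrow> q \<in> Pts \<Longrightarrow> pos p < pos q \<longleftrightarrow> kx p < kx q"
  unfolding pos_def by (rule rk_less_iff[OF fin_Pts kx_inj])
lemma val_less: "p \<in> Pts \<Longrightarrow> q \<in> Pts \<Longrightarrow> val p < val q \<longleftrightarrow> ky p < ky q"
  unfolding val_def by (rule rk_less_iff[OF fin_Pts ky_inj])
lemma pos_inj: "inj_on pos Pts" using pos_bij unfolding bij_betw_def by simp
lemma val_inj: "inj_on val Pts" using val_bij unfolding bij_betw_def by simp

lemma nn_pos: "1 \<le> nn"
proof -
  have "(0, 1) \<in> Pts" unfolding Pts_def using r_pos NN_ge by auto
  hence "Pts \<noteq> {}" by auto
  thus ?thesis unfolding nn_def using fin_Pts by (simp add: Suc_leI card_gt_0_iff)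
qed

lemma perm_is_perm: "is_perm nn perm"
proof -
  have "bij_betw (inv_into Pts pos) {1..nn} Pts" using bij_betw_inv_into[OF pos_bij] .
  hence "bij_betw (val \<circ> inv_into Pts pos) {1..nn} {1..nn}" using val_bij by (rule bij_betw_trans)
  thus ?thesis unfolding is_perm_def perm_def[abs_def] by (simp add: comp_def)
qed

lemma diagram_eq: "diagram nn perm = (\<lambda>p. (pos p, val p)) ` Pts"
proof
  show "diagram nn perm \<subseteq> (\<lambda>p. (pos p, val p)) ` Pts"
  proof
    fix z assume "z \<in> diagram nn perm"
    then obtain i where i: "i \<in> {1..nn}" "z = (i, perm i)" unfolding diagram_def by auto
    have "i \<in> pos ` Pts" using i pos_bij unfolding bij_betw_def by simp
    then obtain p where p: "p \<in> Pts" "i = pos p" by auto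
    have "inv_into Pts pos i = p" using p pos_inj by (simp add: inv_into_f_f)
    thus "z \<in> (\<lambda>p. (pos p, val p)) ` Pts" using i p unfolding perm_def by auto
  qed
next
  show "(\<lambda>p. (pos p, val p)) ` Pts \<subseteq> diagram nn perm"
  proof
    fix z assume "z \<in> (\<lambda>p. (pos p, val p)) ` Pts"
    then obtain p where p: "p \<in> Pts" "z = (pos p, val p)" by auto
    have "pos p \<in> {1..nn}" using p pos_bij unfolding bij_betw_def by auto
    moreover have "inv_into Pts pos (pos p) = p" using p pos_inj by (simp add: inv_into_f_f)
    ultimately show "z \<in> diagram nn perm" unfolding diagram_def perm_def using p by auto
  qed
qed

definition Ic :: "nat \<Rightarrow> nat set" where "Ic c = pos ` {p\<in>Pts. c*B1 \<le> kx p \<and> kx p < (c+1)*B1}"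
definition Jc :: "nat \<Rightarrow> nat set" where "Jc c = val ` {p\<in>Pts. c*B1 \<le> ky p \<and> ky p < (c+1)*B1}"

lemma Ic_alt: "Ic c = pos ` {p\<in>Pts. fst (T (fst p)) = c}"
  unfolding Ic_def using kx_col by (intro image_cong) auto
lemma Jc_alt: "Jc c = val ` {p\<in>Pts. snd (T (fst p)) = c}"
  unfolding Jc_def using ky_row by (intro image_cong) auto

lemma col_range: "p \<in> Pts \<Longrightarrow> fst (T (fst p)) \<in> {1..k} \<and> snd (T (fst p)) \<in> {1..l}"
  using T_vert unfolding Pts_def cg_vertex_def by auto

lemma Ic_part: "interval_partition k nn Ic"
  unfolding interval_partition_def
proof (intro conjI ballI allI impI)
  fix c
  show "int_interval (Ic c)" unfolding int_interval_def Ic_def pos_def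
    using rk_interval[OF fin_Pts kx_inj] by blast
next
  fix c c' x y assume cc: "1 \<le> c \<and> c < c' \<and> c' \<le> k" and x: "x \<in> Ic c" and y: "y \<in> Ic c'"
  obtain p where p: "p \<in> Pts" "x = pos p" "kx p < (c+1)*B1" using x unfolding Ic_def by auto
  obtain q where q: "q \<in> Pts" "y = pos q" "c'*B1 \<le> kx q" using y unfolding Ic_def by auto
  have "(c+1)*B1 \<le> c'*B1" using cc by (intro mult_right_mono) auto
  hence "kx p < kx q" using p q by linarith
  thus "x < y" using pos_less p q by simp
next
  show "(\<Union>i\<in>{1..k}. Ic i) = {1..nn}"
  proof
    show "(\<Union>i\<in>{1..k}. Ic i) \<subseteq> {1..nn}" using pos_bij unfolding Ic_def bij_betw_def by auto
    show "{1..nn} \<subseteq> (\<Union>i\<in>{1..k}. Ic i)"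
    proof
      fix m assume "m \<in> {1..nn}"
      hence "m \<in> pos ` Pts" using pos_bij unfolding bij_betw_def by simp
      then obtain p where p: "p \<in> Pts" "m = pos p" by auto
      thus "m \<in> (\<Union>i\<in>{1..k}. Ic i)" using col_range[OF p(1)] unfolding Ic_alt by auto
    qed
  qed
qed

lemma Jc_part: "interval_partition l nn Jc"
  unfolding interval_partition_def
proof (intro conjI ballI allI impI)
  fix c
  show "int_interval (Jc c)" unfolding int_interval_def Jc_def val_def
    using rk_interval[OF fin_Pts ky_inj] by blast
next
  fix c c' x y assume cc: "1 \<le> c \<and> c < c' \<and> c' \<le> l" and x: "x \<in> Jc c" and y: "y \<in> Jc c'"
  obtain p where p: "p \<in> Pts" "x = val p" "ky p < (c+1)*B1" using x unfolding Jc_def by auto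
  obtain q where q: "q \<in> Pts" "y = val q" "c'*B1 \<le> ky q" using y unfolding Jc_def by auto
  have "(c+1)*B1 \<le> c'*B1" using cc by (intro mult_right_mono) auto
  hence "ky p < ky q" using p q by linarith
  thus "x < y" using val_less p q by simp
next
  show "(\<Union>i\<in>{1..l}. Jc i) = {1..nn}"
  proof
    show "(\<Union>i\<in>{1..l}. Jc i) \<subseteq> {1..nn}" using val_bij unfolding Jc_def bij_betw_def by auto
    show "{1..nn} \<subseteq> (\<Union>i\<in>{1..l}. Jc i)"
    proof
      fix m assume "m \<in> {1..nn}"
      hence "m \<in> val ` Pts" using val_bij unfolding bij_betw_def by simp
      then obtain p where p: "p \<in> Pts" "m = val p" by auto
      thus "m \<in> (\<Union>i\<in>{1..l}. Jc i)" using col_range[OF p(1)] unfolding Jc_alt by auto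
    qed
  qed
qed

lemma cell_set: "diagram nn perm \<inter> (Ic c \<times> Jc c') = (\<lambda>p. (pos p, val p)) ` {p\<in>Pts. fst (T (fst p)) = c \<and> snd (T (fst p)) = c'}"
proof -
  have "\<And>p. p \<in> Pts \<Longrightarrow> pos p \<in> Ic c \<longleftrightarrow> fst (T (fst p)) = c"
    unfolding Ic_alt using pos_inj by (auto dest: inj_onD)
  moreover have "\<And>p. p \<in> Pts \<Longrightarrow> val p \<in> Jc c' \<longleftrightarrow> snd (T (fst p)) = c'"
    unfolding Jc_alt using val_inj by (auto dest: inj_onD)
  ultimately show ?thesis unfolding diagram_eq by auto
qed

lemma cell_ok_empty: "cell_ok x {}" by (cases x) auto

lemma cell_ok_t:
  assumes t: "t < 2*r"
  shows "cell_ok (M (fst (T t)) (snd (T t))) ((\<lambda>p. (pos p, val p)) ` ({t} \<times> {1..2*NN}))"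
proof -
  have ne: "M (fst (T t)) (snd (T t)) \<noteq> Emp" using T_vert[OF t] unfolding cg_vertex_def by simp
  have inP: "(t,i) \<in> Pts" if "i \<in> {1..2*NN}" for i using that t unfolding Pts_def by auto
  have kxl: "kx (t,i) < kx (t,i') \<longleftrightarrow> i < i'" for i i' unfolding kx_def by simp
  have kyl: "ky (t,i) < ky (t,i') \<longleftrightarrow> ysub t i < ysub t i'" for i i' unfolding ky_def by simp
  show ?thesis
  proof (cases "M (fst (T t)) (snd (T t))")
    case Inc
    hence d0: "d t = 0" unfolding d_def by simp
    show ?thesis unfolding Inc cell_ok.simps
    proof (intro ballI, clarify)
      fix i i' assume i: "i \<in> {1..2*NN}" and i': "i' \<in> {1..2*NN}" and lt: "pos (t,i) < pos (t,i')"
      have "i < i'" using lt pos_less[OF inP[OF i] inP[OF i']] kxl by simp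
      hence "ysub t i < ysub t i'" using ysub_mono[of i i' t] i' d0 by simp
      thus "val (t,i) < val (t,i')" using val_less[OF inP[OF i] inP[OF i']] kyl by simp
    qed
  next
    case Dec
    hence d1: "d t = 1" unfolding d_def by simp
    show ?thesis unfolding Dec cell_ok.simps
    proof (intro ballI, clarify)
      fix i i' assume i: "i \<in> {1..2*NN}" and i': "i' \<in> {1..2*NN}" and lt: "pos (t,i) < pos (t,i')"
      have "i < i'" using lt pos_less[OF inP[OF i] inP[OF i']] kxl by simp
      hence "ysub t i' < ysub t i" using ysub_mono[of i i' t] i' d1 by simp
      thus "val (t,i') < val (t,i)" using val_less[OF inP[OF i'] inP[OF i]] kyl by simp
    qed
  next
    case Emp thus ?thesis using ne by simp
  qed
qed

theorem in_grid: "in_Grid k l M nn perm"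
  unfolding in_Grid_def
proof (intro conjI exI)
  show "is_perm nn perm" by (rule perm_is_perm)
  show "is_gridding k l M nn perm Ic Jc"
    unfolding is_gridding_def
  proof (intro conjI ballI)
    show "interval_partition k nn Ic" by (rule Ic_part)
    show "interval_partition l nn Jc" by (rule Jc_part)
    fix c c' assume c: "c \<in> {1..k}" and c': "c' \<in> {1..l}"
    show "cell_ok (M c c') (diagram nn perm \<inter> (Ic c \<times> Jc c'))"
    proof (cases "\<exists>t<2*r. T t = (c, c')")
      case True
      then obtain t where t: "t < 2*r" "T t = (c,c')" by blast
      have "{p\<in>Pts. fst (T (fst p)) = c \<and> snd (T (fst p)) = c'} = {t} \<times> {1..2*NN}"
      proof
        show "{p\<in>Pts. fst (T (fst p)) = c \<and> snd (T (fst p)) = c'} \<subseteq> {t} \<times> {1..2*NN}"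
        proof
          fix p assume p: "p \<in> {p\<in>Pts. fst (T (fst p)) = c \<and> snd (T (fst p)) = c'}"
          hence "T (fst p) = T t" using t by (simp add: prod_eq_iff)
          moreover have "fst p < 2*r" using p unfolding Pts_def by auto
          ultimately have "fst p = t" using T_inj t(1) by (auto dest: inj_onD)
          thus "p \<in> {t} \<times> {1..2*NN}" using p unfolding Pts_def by (auto simp: mem_Times_iff)
        qed
        show "{t} \<times> {1..2*NN} \<subseteq> {p\<in>Pts. fst (T (fst p)) = c \<and> snd (T (fst p)) = c'}"
          using t unfolding Pts_def by auto
      qed
      thus ?thesis unfolding cell_set using cell_ok_t[OF t(1)] t(2) by simp
    next
      case False
      have E: "{p\<in>Pts. fst (T (fst p)) = c \<and> snd (T (fst p)) = c'} = {}"
        using False unfolding Pts_def by (auto simp: prod_eq_iff)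
      show ?thesis unfolding cell_set E image_empty by (rule cell_ok_empty)
    qed
  qed
qed

end

context constr begin

definition vv :: "nat \<Rightarrow> nat \<Rightarrow> nat" where "vv x j = Rp (cc*j) (x + j*s)"
definition pt :: "nat \<Rightarrow> nat \<Rightarrow> nat \<Rightarrow> nat \<times> nat" where "pt t x j = (t, Rp (EE t) (vv x j))"
definition sig :: "nat \<Rightarrow> nat \<Rightarrow> nat \<times> nat" where "sig x u = pt (u mod (2*r)) x (u div (2*r))"
definition LL :: nat where "LL = 2*r*JJ"
definition Row :: "nat \<Rightarrow> (nat \<times> nat) set" where "Row x = sig x ` {..<LL}"
definition tau :: "nat \<Rightarrow> nat \<Rightarrow> nat \<times> nat" where "tau q u = (u mod 2, q*PP + 1 + u div 2)"
definition Col :: "nat \<Rightarrow> (nat \<times> nat) set" where "Col q = tau q ` {..<2*PP}"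

lemma Rp_par: "odd a = odd b \<Longrightarrow> Rp a i = Rp b i" unfolding Rp_def by simp

lemma w_bound: "x \<le> PP \<Longrightarrow> j < JJ \<Longrightarrow> x + j*s + s \<le> NN"
proof -
  assume x: "x \<le> PP" and j: "j < JJ"
  have "j \<le> 2*PP" using j unfolding JJ_def by simp
  hence "j*s \<le> 2*PP*PP" using PP_ge by (intro mult_le_mono) auto
  moreover have "NN = 2*PP*PP + 3*PP" unfolding NN_def JJ_def by (simp add: algebra_simps)
  ultimately show ?thesis using x PP_ge by linarith
qed

lemma vv_range: "x \<in> {1..PP} \<Longrightarrow> j < JJ \<Longrightarrow> vv x j \<in> {1..2*NN}"
  unfolding vv_def using w_bound[of x j] by (intro Rp_range) auto

lemma vv_low: "x \<in> {1..PP} \<Longrightarrow> j < JJ \<Longrightarrow> even (cc*j) \<Longrightarrow> vv x j = x + j*s"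
  unfolding vv_def Rp_def by simp

lemma vv_inj:
  assumes x: "x \<in> {1..PP}" "x' \<in> {1..PP}" and j: "j < JJ" "j' < JJ" and e: "vv x j = vv x' j'"
  shows "x = x' \<and> j = j'"
proof -
  have "x + j*s + s \<le> NN" "x' + j'*s + s \<le> NN" using w_bound x j by auto
  hence wb: "x + j*s \<le> NN" "x' + j'*s \<le> NN" by linarith+
  have par: "odd (cc*j) = odd (cc*j')"
  proof (rule ccontr)
    assume "odd (cc*j) \<noteq> odd (cc*j')"
    thus False using e wb unfolding vv_def Rp_def by (auto split: if_splits)
  qed
  have w: "x + j*s = x' + j'*s"
    using e wb Rp_par[OF par] Rp_inj[of "x + j*s" "x' + j'*s" "cc*j'"] unfolding vv_def by auto
  have gap: "(cc+1) \<le> j' - j" if jj: "j < j'"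
  proof -
    show ?thesis
    proof (cases "cc = 0")
      case True thus ?thesis using jj by simp
    next
      case False hence "cc = 1" using cc01 by simp
      hence "odd j = odd j'" using par by simp
      hence "j' \<noteq> j + 1" by auto
      thus ?thesis using jj \<open>cc = 1\<close> by simp
    qed
  qed
  have "\<not> j < j'"
  proof
    assume jj: "j < j'"
    have "x = x' + (j' - j)*s" using w jj by (simp add: diff_mult_distrib)
    moreover have "(cc+1)*s \<le> (j'-j)*s" using gap[OF jj] by (intro mult_right_mono) auto
    ultimately have "x \<ge> x' + PP" unfolding PP_def by simp
    thus False using x by simp
  qed
  moreover have "\<not> j' < j"
  proof
    assume jj: "j' < j"
    have gap': "(cc+1) \<le> j - j'"
    proof (cases "cc = 0")
      case True thus ?thesis using jj by simp
    next
      case False hence "cc = 1" using cc01 by simp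
      hence "odd j = odd j'" using par by simp
      hence "j \<noteq> j' + 1" by auto
      thus ?thesis using jj \<open>cc = 1\<close> by simp
    qed
    have "x' = x + (j - j')*s" using w jj by (simp add: diff_mult_distrib)
    moreover have "(cc+1)*s \<le> (j-j')*s" using gap' by (intro mult_right_mono) auto
    ultimately have "x' \<ge> x + PP" unfolding PP_def by simp
    thus False using x by simp
  qed
  ultimately have "j = j'" by simp
  thus ?thesis using w by simp
qed

end

context constr begin

lemma sum_split0: "(\<Sum>t<Suc m. f t) = f 0 + (\<Sum>u\<in>{1..m}. (f::nat\<Rightarrow>nat) u)"
proof (induction m)
  case 0 thus ?case by simp
next
  case (Suc m)
  have "(\<Sum>t<Suc (Suc m). f t) = (\<Sum>t<Suc m. f t) + f (Suc m)" by simp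
  also have "\<dots> = f 0 + ((\<Sum>u\<in>{1..m}. f u) + f (Suc m))" using Suc by simp
  also have "(\<Sum>u\<in>{1..m}. f u) + f (Suc m) = (\<Sum>u\<in>{1..Suc m}. f u)" by simp
  finally show ?case .
qed

lemma EE_0: "EE 0 = 0" unfolding EE_def by simp
lemma EE_even: "even t \<Longrightarrow> EE (t+1) = EE t" unfolding EE_def by simp
lemma EE_odd: "odd t \<Longrightarrow> EE (t+1) = EE t + d t + d (t+1)"
proof -
  assume "odd t"
  then obtain m where m: "t = 2*m+1" by (metis oddE)
  have a: "2*((t+1) div 2) = Suc (Suc (2*m))" using m by simp
  have b: "2*(t div 2) = 2*m" using m by simp
  have "EE (t+1) = (\<Sum>u\<in>{1..Suc (Suc (2*m))}. d u)" unfolding EE_def a by simp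
  also have "\<dots> = (\<Sum>u\<in>{1..2*m}. d u) + d (Suc (2*m)) + d (Suc (Suc (2*m)))" by simp
  finally show ?thesis unfolding EE_def b using m by simp
qed
lemma DD_split: "DD = d 0 + EE (2*r-1) + d (2*r-1)"
proof -
  obtain m where m: "r = Suc m" using r_pos by (cases r) auto
  have e: "2*r = Suc (Suc (2*m))" "2*r - 1 = Suc (2*m)" "2*((2*r-1) div 2) = 2*m" using m by auto
  have "DD = (\<Sum>t<Suc (2*m). d t) + d (Suc (2*m))" unfolding DD_def e by simp
  also have "(\<Sum>t<Suc (2*m). d t) = d 0 + (\<Sum>u\<in>{1..2*m}. d u)" by (rule sum_split0)
  finally show ?thesis unfolding EE_def e by simp
qed

lemma cc_par: "odd cc = odd DD" unfolding cc_def by simp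

lemma sig_Pts: "x \<in> {1..PP} \<Longrightarrow> u < LL \<Longrightarrow> sig x u \<in> Pts"
proof -
  assume x: "x \<in> {1..PP}" and u: "u < LL"
  have "u < JJ * (2*r)" using u unfolding LL_def by (simp add: mult.commute)
  hence "u div (2*r) < JJ" using r_pos by (simp add: div_less_iff_less_mult)
  hence "vv x (u div (2*r)) \<in> {1..2*NN}" using vv_range x by simp
  hence "Rp (EE (u mod (2*r))) (vv x (u div (2*r))) \<in> {1..2*NN}" by (rule Rp_range)
  moreover have "u mod (2*r) < 2*r" using r_pos by simp
  ultimately show ?thesis unfolding sig_def pt_def Pts_def by simp
qed

definition kadj :: "nat \<times> nat \<Rightarrow> nat \<times> nat \<Rightarrow> bool" where
  "kadj a b \<longleftrightarrow> kx b = Suc (kx a) \<or> ky b = Suc (ky a)"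

lemma adj_even:
  assumes t: "even t" "t + 1 < 2*r" and z: "z \<in> {1..2*NN}"
  shows "kadj (t, Rp (EE t) z) (t+1, Rp (EE (t+1)) z)"
proof -
  obtain m where m: "t = 2*m" using t(1) by (metis evenE)
  have "m < r" using t m by simp
  hence "fst (T t) = fst (T (t+1))" using T_col m by simp
  moreover have "(t+1) div 2 = t div 2" "(t+1) mod 2 = 1" "t mod 2 = 0" using m by auto
  ultimately show ?thesis unfolding kadj_def kx_def EE_even[OF t(1)] by simp
qed

lemma adj_odd:
  assumes t: "odd t" "t + 1 < 2*r" and z: "z \<in> {1..2*NN}"
  shows "kadj (t, Rp (EE t) z) (t+1, Rp (EE (t+1)) z)"
proof -
  obtain m where m: "t = 2*m+1" using t(1) by (metis oddE)
  have mr: "m < r" using t m by simp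
  have row: "snd (T t) = snd (T (t+1))" using T_row[OF mr] m t(2) by simp
  have lk1: "lk t = m" "lk (t+1) = m" unfolding lk_def using m by auto
  have tn: "t \<noteq> 2*r - 1" using t by simp
  have z2: "z \<le> 2*NN" using z by simp
  have Rz: "Rp (EE t) z \<le> 2*NN" using Rp_range[OF z] by simp
  have "Rp (d (t+1)) (Rp (EE (t+1)) z) = Rp (d (t+1) + EE (t+1)) z" using Rp_comp[OF z2] by simp
  also have "\<dots> = Rp (d t + EE t) z"
  proof (rule Rp_par)
    show "odd (d (t+1) + EE (t+1)) = odd (d t + EE t)" using EE_odd[OF t(1)] by auto
  qed
  also have "\<dots> = Rp (d t) (Rp (EE t) z)" using Rp_comp[OF z2] by simp
  finally have R: "Rp (d (t+1)) (Rp (EE (t+1)) z) = Rp (d t) (Rp (EE t) z)" .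
  have ys1: "ysub t (Rp (EE t) z) = 2 * Rp (d t) (Rp (EE t) z)" unfolding ysub_def using t(1) tn by simp
  have ys2: "ysub (t+1) (Rp (EE (t+1)) z) = 2 * Rp (d t) (Rp (EE t) z) + 1"
    unfolding ysub_def using t(1) R by simp
  show ?thesis unfolding kadj_def ky_def using row lk1 ys1 ys2 by simp
qed

lemma adj_wrap:
  assumes x: "x \<in> {1..PP}" and j: "j + 1 < JJ"
  shows "kadj (2*r-1, Rp (EE (2*r-1)) (vv x j)) (0, Rp (EE 0) (vv x (j+1)))"
proof -
  define w where "w = x + j*s"
  have wb: "w + s \<le> NN" using w_bound[of x j] x j unfolding w_def by simp
  have v0: "vv x j = Rp (cc*j) w" unfolding vv_def w_def by simp
  have v1: "vv x (j+1) = Rp (cc*(j+1)) (w + s)" unfolding vv_def w_def by (simp add: algebra_simps)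
  have row: "snd (T (2*r-1)) = snd (T 0)"
    using T_row[of "r-1"] r_pos by (simp add: Suc_diff_Suc numeral_2_eq_2)
  have lk1: "lk (2*r-1) = r - 1" "lk 0 = r - 1" unfolding lk_def using r_pos by auto
  have t1: "odd (2*r-1)" "2*r-1 \<noteq> 0" using r_pos by auto
  define e where "e = d 0 + cc*(j+1)"
  have L: "Rp (d 0) (Rp (EE 0) (vv x (j+1))) = Rp e (w+s)"
    unfolding EE_0 v1 e_def using Rp_comp wb Rp_even[of 0] by (simp add: Rp_comp)
  have R: "Rp (d (2*r-1)) (Rp (EE (2*r-1)) (vv x j)) = Rp e w"
  proof -
    have w2: "w \<le> 2*NN" using wb by simp
    have "Rp (d (2*r-1)) (Rp (EE (2*r-1)) (vv x j)) = Rp (d (2*r-1) + (EE (2*r-1) + cc*j)) w"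
      unfolding v0 using Rp_comp w2 by (simp add: Rp_comp)
    also have "\<dots> = Rp e w"
    proof (rule Rp_par)
      have "odd cc = odd (d 0 + EE (2*r-1) + d (2*r-1))" using cc_par DD_split by simp
      thus "odd (d (2*r-1) + (EE (2*r-1) + cc*j)) = odd e" unfolding e_def by auto
    qed
    finally show ?thesis .
  qed
  have key: "psi' (Rp e (w+s)) = Rp e w + s"
  proof (cases "odd e")
    case False thus ?thesis unfolding Rp_def psi'_def using wb by simp
  next
    case True
    have "\<not> (2*NN+1 - (w+s) \<le> NN)" using wb by simp
    hence "psi' (2*NN+1 - (w+s)) = 2*NN+1 - (w+s) + 2*s" unfolding psi'_def by simp
    also have "\<dots> = (2*NN+1 - w) + s" using wb by simp
    finally show ?thesis unfolding Rp_def using True by simp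
  qed
  have ys1: "ysub (2*r-1) (Rp (EE (2*r-1)) (vv x j)) = 2 * (Rp e w + s)"
    unfolding ysub_def using t1 R by simp
  have ys2: "ysub 0 (Rp (EE 0) (vv x (j+1))) = 2 * (Rp e w + s) + 1"
    unfolding ysub_def using L key by simp
  show ?thesis unfolding kadj_def ky_def using row lk1 ys1 ys2 by simp
qed

end

context constr begin

lemma LL_pos: "0 < LL" unfolding LL_def JJ_def using r_pos by simp

lemma sig_adj:
  assumes x: "x \<in> {1..PP}" and u: "u + 1 < LL"
  shows "kadj (sig x u) (sig x (u+1))"
proof -
  define t where "t = u mod (2*r)"
  define j where "j = u div (2*r)"
  have r2: "0 < 2*r" using r_pos by simp
  have uj: "u = j*(2*r) + t" unfolding t_def j_def using div_mult_mod_eq[of u "2*r"] by simp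
  have tr: "t < 2*r" unfolding t_def using r2 by simp
  have "u < JJ * (2*r)" using u unfolding LL_def by (simp add: mult.commute)
  hence jJ: "j < JJ" unfolding j_def using r2 by (simp add: div_less_iff_less_mult)
  have z: "vv x j \<in> {1..2*NN}" using vv_range x jJ by simp
  show ?thesis
  proof (cases "t + 1 < 2*r")
    case True
    have "u + 1 = j*(2*r) + (t+1)" using uj by simp
    hence m: "(u+1) mod (2*r) = t+1" "(u+1) div (2*r) = j" using decomp[OF True, of j] by auto
    have s0: "sig x u = (t, Rp (EE t) (vv x j))" unfolding sig_def pt_def t_def j_def by simp
    have s1: "sig x (u+1) = (t+1, Rp (EE (t+1)) (vv x j))" unfolding sig_def pt_def m by simp
    show ?thesis
    proof (cases "even t")
      case True thus ?thesis using adj_even[OF True \<open>t+1 < 2*r\<close> z] s0 s1 by simp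
    next
      case False thus ?thesis using adj_odd[OF _ \<open>t+1 < 2*r\<close> z] s0 s1 by simp
    qed
  next
    case False
    hence t1: "t = 2*r - 1" using tr by simp
    have "u + 1 = (j+1)*(2*r) + 0" using uj t1 r2 by (simp add: algebra_simps)
    hence m: "(u+1) mod (2*r) = 0" "(u+1) div (2*r) = j+1" using decomp[OF r2, of "j+1"] by auto
    have "(j+1)*(2*r) < JJ*(2*r)" using u \<open>u + 1 = (j+1)*(2*r) + 0\<close> unfolding LL_def by (simp add: mult.commute)
    hence jJ1: "j + 1 < JJ" using r2 mult_less_cancel2 by blast
    have s0: "sig x u = (2*r-1, Rp (EE (2*r-1)) (vv x j))" unfolding sig_def pt_def using t1 unfolding t_def j_def by simp
    have s1: "sig x (u+1) = (0, Rp (EE 0) (vv x (j+1)))" unfolding sig_def pt_def m by simp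
    show ?thesis using adj_wrap[OF x jJ1] s0 s1 by simp
  qed
qed

lemma sig_inj:
  assumes x: "x \<in> {1..PP}" "x' \<in> {1..PP}" and u: "u < LL" "u' < LL" and e: "sig x u = sig x' u'"
  shows "x = x' \<and> u = u'"
proof -
  have r2: "0 < 2*r" using r_pos by simp
  have jJ: "u div (2*r) < JJ" "u' div (2*r) < JJ"
    using u r2 unfolding LL_def by (simp_all add: div_less_iff_less_mult mult.commute)
  have t: "u mod (2*r) = u' mod (2*r)" using e unfolding sig_def pt_def by simp
  have "Rp (EE (u mod (2*r))) (vv x (u div (2*r))) = Rp (EE (u mod (2*r))) (vv x' (u' div (2*r)))"
    using e t unfolding sig_def pt_def by simp
  moreover have "vv x (u div (2*r)) \<le> 2*NN" "vv x' (u' div (2*r)) \<le> 2*NN"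
    using vv_range x jJ by auto
  ultimately have "vv x (u div (2*r)) = vv x' (u' div (2*r))" using Rp_inj by blast
  hence "x = x' \<and> u div (2*r) = u' div (2*r)" using vv_inj x jJ by blast
  thus ?thesis using t by (metis div_mult_mod_eq)
qed

lemma Row_card: "x \<in> {1..PP} \<Longrightarrow> card (Row x) = LL"
proof -
  assume x: "x \<in> {1..PP}"
  have "inj_on (sig x) {..<LL}" using sig_inj[OF x x] by (intro inj_onI) auto
  thus ?thesis unfolding Row_def by (simp add: card_image)
qed

lemma Row_disj: "x \<in> {1..PP} \<Longrightarrow> x' \<in> {1..PP} \<Longrightarrow> x \<noteq> x' \<Longrightarrow> Row x \<inter> Row x' = {}"
  unfolding Row_def using sig_inj by blast

lemma Row_Pts: "x \<in> {1..PP} \<Longrightarrow> Row x \<subseteq> Pts" unfolding Row_def using sig_Pts by auto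

lemma tau_Pts: "q < PP \<Longrightarrow> u < 2*PP \<Longrightarrow> tau q u \<in> Pts"
proof -
  assume q: "q < PP" and u: "u < 2*PP"
  have "q*PP \<le> (PP-1)*PP" using q by simp
  moreover have "u div 2 < PP" using u by simp
  moreover have "(PP-1)*PP + PP = PP*PP" using PP_ge s_pos by (cases PP) auto
  moreover have "PP*PP \<le> 2*NN" unfolding NN_def JJ_def by simp
  ultimately have "q*PP + 1 + u div 2 \<le> 2*NN" by linarith
  moreover have "u mod 2 < 2*r" using r_pos by (simp add: less_le_trans[of _ 2])
  ultimately show ?thesis unfolding tau_def Pts_def by simp
qed

lemma Col_Pts: "q < PP \<Longrightarrow> Col q \<subseteq> Pts" unfolding Col_def using tau_Pts by auto

lemma tau_adj: "kadj (tau q u) (tau q (u+1))"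
proof -
  have c01: "fst (T 0) = fst (T 1)" using T_col[of 0] r_pos by simp
  show ?thesis
  proof (cases "even u")
    case True
    hence "(u+1) mod 2 = 1" "u mod 2 = 0" "(u+1) div 2 = u div 2" by auto
    thus ?thesis unfolding kadj_def tau_def kx_def using c01 by simp
  next
    case False
    hence "(u+1) mod 2 = 0" "u mod 2 = 1" "(u+1) div 2 = u div 2 + 1" by (auto elim: oddE)
    thus ?thesis unfolding kadj_def tau_def kx_def using c01 by simp
  qed
qed

lemma Col_disj: "q < PP \<Longrightarrow> q' < PP \<Longrightarrow> q \<noteq> q' \<Longrightarrow> Col q \<inter> Col q' = {}"
proof -
  assume q: "q < PP" "q' < PP" "q \<noteq> q'"
  { fix u u' assume u: "u < 2*PP" "u' < 2*PP" and e: "tau q u = tau q' u'"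
    have "q*PP + u div 2 = q'*PP + u' div 2" using e unfolding tau_def by simp
    moreover have "u div 2 < PP" "u' div 2 < PP" using u by auto
    ultimately have "q = q'" using decomp by metis
  }
  thus ?thesis using q unfolding Col_def by blast
qed

lemma Row_Col: "x \<in> {1..PP} \<Longrightarrow> q < PP \<Longrightarrow> Row x \<inter> Col q \<noteq> {}"
proof -
  assume x: "x \<in> {1..PP}" and q: "q < PP"
  define j where "j = (cc+1)*q"
  have jJ: "j < JJ"
  proof (cases "cc = 0")
    case True thus ?thesis using q unfolding j_def JJ_def PP_def by simp
  next
    case False hence "cc = 1" using cc01 by simp
    thus ?thesis using q unfolding j_def JJ_def PP_def by simp
  qed
  have ev: "even (cc*j)" unfolding j_def using cc01 by (cases "cc = 0") auto
  have js: "j*s = q*PP" unfolding j_def PP_def by (simp add: algebra_simps)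
  have u: "j*(2*r) < LL" using jJ r_pos unfolding LL_def by simp
  have "sig x (j*(2*r)) = (0, vv x j)" unfolding sig_def pt_def using r_pos EE_0 Rp_even[of 0] by simp
  also have "\<dots> = (0, x + q*PP)" using vv_low[OF x jJ ev] js by simp
  also have "\<dots> = tau q (2*(x-1))" unfolding tau_def using x by simp
  finally have "sig x (j*(2*r)) = tau q (2*(x-1))" .
  moreover have "2*(x-1) < 2*PP" using x by auto
  ultimately show ?thesis unfolding Row_def Col_def using u by blast
qed

end


lemma ivt:
  fixes f :: "nat \<Rightarrow> 'a" and i j L :: nat
  assumes "i < L" "P (f i)" "j < L" "\<not> P (f j)"
  shows "\<exists>u. u + 1 < L \<and> P (f u) \<noteq> P (f (u+1))"
proof (rule ccontr)
  assume "\<not> ?thesis"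
  hence step: "u + 1 < L \<Longrightarrow> P (f (u+1)) = P (f u)" for u by auto
  have all: "u < L \<Longrightarrow> P (f u) = P (f 0)" for u
  proof (induction u)
    case 0 thus ?case by simp
  next
    case (Suc u)
    hence "u < L" by simp
    hence a: "P (f u) = P (f 0)" using Suc.IH by blast
    have b: "P (f (u+1)) = P (f u)" using step[of u] Suc.prems by simp
    show ?case using a b by simp
  qed
  show False using all[OF assms(1)] all[OF assms(3)] assms(2,4) by simp
qed

lemma mixed_le:
  assumes "\<forall>x\<in>X. \<exists>e\<in>E. fst e \<in> R x" "\<forall>x\<in>X. \<forall>y\<in>X. x \<noteq> y \<longrightarrow> R x \<inter> R y = {}" "finite E"
  shows "card X \<le> card E"
proof -
  define g where "g x = (SOME e. e \<in> E \<and> fst e \<in> R x)" for x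
  have g: "g x \<in> E \<and> fst (g x) \<in> R x" if "x \<in> X" for x
    unfolding g_def by (rule someI_ex) (use assms(1) that in blast)
  have "inj_on g X"
  proof (rule inj_onI)
    fix x y assume xy: "x \<in> X" "y \<in> X" "g x = g y"
    have "fst (g x) \<in> R x" "fst (g x) \<in> R y" using g[OF xy(1)] g[OF xy(2)] xy(3) by auto
    hence "R x \<inter> R y \<noteq> {}" by blast
    thus "x = y" using assms(2) xy(1,2) by blast
  qed
  moreover have "g ` X \<subseteq> E" using g by auto
  ultimately show ?thesis using assms(3) by (rule card_inj_on_le)
qed

lemma iso:
  fixes R C :: "nat \<Rightarrow> 'a set"
  assumes finA: "finite A" and finR: "\<forall>x\<in>A. finite (R x)" and cardR: "\<forall>x\<in>A. card (R x) = L"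
   and disj: "\<forall>x\<in>A. \<forall>y\<in>A. x \<noteq> y \<longrightarrow> R x \<inter> R y = {}"
   and meet: "\<forall>x\<in>A. \<forall>q\<in>B. R x \<inter> C q \<noteq> {}"
   and U: "U = (\<Union>x\<in>A. R x)"
   and b1: "card U < 3 * card (U \<inter> S)" and b2: "3 * card (U \<inter> S) \<le> 2 * card U"
  shows "card A \<le> 3 * card {x\<in>A. R x \<inter> S \<noteq> {} \<and> R x - S \<noteq> {}} \<or> (\<forall>q\<in>B. C q \<inter> S \<noteq> {} \<and> C q - S \<noteq> {})"
proof -
  let ?Mx = "{x\<in>A. R x \<inter> S \<noteq> {} \<and> R x - S \<noteq> {}}"
  have finU: "finite U" using U finA finR by simp
  have cU: "card U = card A * L"
  proof -
    have "card U = (\<Sum>x\<in>A. card (R x))" unfolding U using finA finR disj by (intro card_UN_disjoint) auto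
    also have "\<dots> = card A * L" using cardR by simp
    finally show ?thesis .
  qed
  have split: "card U = card (U \<inter> S) + card (U - S)"
    using finU by (metis card_Int_Diff)
  have finMx: "finite ?Mx" using finA by simp
  have cMx: "card (\<Union>x\<in>?Mx. R x) \<le> card ?Mx * L"
  proof -
    have "card (\<Union>x\<in>?Mx. R x) \<le> (\<Sum>x\<in>?Mx. card (R x))" by (rule card_UN_le[OF finMx])
    also have "\<dots> = card ?Mx * L" using cardR by simp
    finally show ?thesis .
  qed
  have Lpos: "0 < L"
  proof (rule ccontr)
    assume "\<not> 0 < L" hence "card U = 0" using cU by simp
    hence "U = {}" using finU by simp
    thus False using b1 by simp
  qed
  show ?thesis
  proof (cases "\<forall>q\<in>B. C q \<inter> S \<noteq> {} \<and> C q - S \<noteq> {}")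
    case True thus ?thesis by simp
  next
    case False
    then obtain q where q: "q \<in> B" "C q \<inter> S = {} \<or> C q - S = {}" by blast
    from q(2) show ?thesis
    proof
      assume cq: "C q \<inter> S = {}"
      have "U \<inter> S \<subseteq> (\<Union>x\<in>?Mx. R x)"
      proof
        fix p assume p: "p \<in> U \<inter> S"
        then obtain x where x: "x \<in> A" "p \<in> R x" using U by auto
        have "R x \<inter> C q \<noteq> {}" using meet x q by blast
        hence "R x - S \<noteq> {}" using cq by blast
        thus "p \<in> (\<Union>x\<in>?Mx. R x)" using x p by blast
      qed
      hence "card (U \<inter> S) \<le> card ?Mx * L"
        using cMx card_mono[of "\<Union>x\<in>?Mx. R x" "U \<inter> S"] finMx finR by fastforce
      hence "card A * L < 3 * card ?Mx * L" using b1 cU by linarith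
      hence "card A < 3 * card ?Mx" by simp
      thus ?thesis by simp
    next
      assume cq: "C q - S = {}"
      have "U - S \<subseteq> (\<Union>x\<in>?Mx. R x)"
      proof
        fix p assume p: "p \<in> U - S"
        then obtain x where x: "x \<in> A" "p \<in> R x" using U by auto
        have "R x \<inter> C q \<noteq> {}" using meet x q by blast
        hence "R x \<inter> S \<noteq> {}" using cq by blast
        thus "p \<in> (\<Union>x\<in>?Mx. R x)" using x p by blast
      qed
      hence "card (U - S) \<le> card ?Mx * L"
        using cMx card_mono[of "\<Union>x\<in>?Mx. R x" "U - S"] finMx finR by fastforce
      hence "card A * L \<le> 3 * card ?Mx * L" using b2 cU split by linarith
      hence "card A \<le> 3 * card ?Mx" using Lpos by simp
      thus ?thesis by simp
    qed
  qed
qed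

context constr begin

definition emb :: "nat \<times> nat \<Rightarrow> nat \<times> nat" where "emb p = (pos p, val p)"
definition CE :: "(nat \<times> nat) set \<Rightarrow> ((nat \<times> nat) \<times> (nat \<times> nat)) set" where
  "CE S = {e \<in> Pts \<times> Pts. (pos (snd e) = Suc (pos (fst e)) \<or> val (snd e) = Suc (val (fst e))) \<and> (fst e \<in> S \<longleftrightarrow> snd e \<notin> S)}"

lemma kadj_adj: "a \<in> Pts \<Longrightarrow> b \<in> Pts \<Longrightarrow> kadj a b \<Longrightarrow> pos b = Suc (pos a) \<or> val b = Suc (val a)"
proof -
  assume ab: "a \<in> Pts" "b \<in> Pts" "kadj a b"
  show ?thesis
  proof (cases "kx b = Suc (kx a)")
    case True thus ?thesis unfolding pos_def using rk_succ[OF fin_Pts kx_inj ab(1) ab(2)] by simp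
  next
    case False hence "ky b = Suc (ky a)" using ab(3) unfolding kadj_def by simp
    thus ?thesis unfolding val_def using rk_succ[OF fin_Pts ky_inj ab(1) ab(2)] by simp
  qed
qed

lemma fin_CE: "finite (CE S)"
proof -
  have "CE S \<subseteq> Pts \<times> Pts" unfolding CE_def by (rule Collect_restrict)
  thus ?thesis using fin_Pts by (simp add: finite_subset)
qed

lemma ends_bound:
  fixes f :: "nat \<times> nat \<Rightarrow> nat"
  assumes injf: "inj_on f Pts" and S: "S \<subseteq> Pts"
  shows "card {e \<in> Pts \<times> Pts. f (snd e) = Suc (f (fst e)) \<and> (fst e \<in> S \<longleftrightarrow> snd e \<notin> S)} \<le> 2 * intervalicity (f ` S)"
proof -
  let ?X = "f ` S"
  let ?E = "{e \<in> Pts \<times> Pts. f (snd e) = Suc (f (fst e)) \<and> (fst e \<in> S \<longleftrightarrow> snd e \<notin> S)}"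
  let ?A1 = "{u\<in>?X. Suc u \<notin> ?X}"
  let ?A2 = "{u. u \<notin> ?X \<and> Suc u \<in> ?X}"
  have finX: "finite ?X" using S fin_Pts finite_subset by blast
  have memX: "f p \<in> ?X \<longleftrightarrow> p \<in> S" if p: "p \<in> Pts" for p
  proof
    assume "f p \<in> ?X"
    then obtain q where q: "q \<in> S" "f p = f q" by blast
    have "q \<in> Pts" using q S by blast
    hence "p = q" using inj_onD[OF injf q(2) p] by simp
    thus "p \<in> S" using q by simp
  qed simp
  have fin2: "finite ?A2"
  proof (rule finite_subset[of _ "(\<lambda>v. v - 1) ` ?X"])
    show "?A2 \<subseteq> (\<lambda>v. v - 1) ` ?X"
    proof
      fix u assume "u \<in> ?A2"
      hence "Suc u \<in> ?X" by simp
      thus "u \<in> (\<lambda>v. v - 1) ` ?X" by (rule rev_image_eqI) simp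
    qed
  qed (use finX in simp)
  have "inj_on (\<lambda>e. f (fst e)) ?E"
  proof (rule inj_onI)
    fix e e' assume e: "e \<in> ?E" "e' \<in> ?E" "f (fst e) = f (fst e')"
    obtain a b where eab: "e = (a,b)" by (cases e)
    obtain a' b' where eab': "e' = (a',b')" by (cases e')
    have P: "a \<in> Pts" "b \<in> Pts" "a' \<in> Pts" "b' \<in> Pts" "f b = Suc (f a)" "f b' = Suc (f a')"
      using e unfolding eab eab' by auto
    have "f a = f a'" using e(3) unfolding eab eab' by simp
    hence aa: "a = a'" using inj_onD[OF injf _ P(1) P(3)] by simp
    hence "f b = f b'" using P by simp
    hence "b = b'" using inj_onD[OF injf _ P(2) P(4)] by simp
    thus "e = e'" using aa eab eab' by simp
  qed
  moreover have "(\<lambda>e. f (fst e)) ` ?E \<subseteq> ?A1 \<union> ?A2"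
  proof
    fix u assume "u \<in> (\<lambda>e. f (fst e)) ` ?E"
    then obtain e where e: "e \<in> ?E" "u = f (fst e)" by blast
    obtain a b where eab: "e = (a,b)" by (cases e)
    have ab: "a \<in> Pts" "b \<in> Pts" "f b = Suc (f a)" "a \<in> S \<longleftrightarrow> b \<notin> S" "u = f a"
      using e unfolding eab by auto
    have ma: "f a \<in> ?X \<longleftrightarrow> a \<in> S" by (rule memX[OF ab(1)])
    have mb: "Suc u \<in> ?X \<longleftrightarrow> b \<in> S" using memX[OF ab(2)] ab(3,5) by simp
    show "u \<in> ?A1 \<union> ?A2"
    proof (cases "a \<in> S")
      case True
      hence "u \<in> ?X" "Suc u \<notin> ?X" using ma mb ab(4,5) by auto
      thus ?thesis by blast
    next
      case False
      hence "u \<notin> ?X" "Suc u \<in> ?X" using ma mb ab(4,5) by auto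
      thus ?thesis by blast
    qed
  qed
  moreover have "finite (?A1 \<union> ?A2)" using finX fin2 by simp
  ultimately have "card ?E \<le> card (?A1 \<union> ?A2)" by (rule card_inj_on_le)
  also have "\<dots> \<le> card ?A1 + card ?A2" by (rule card_Un_le)
  also have "\<dots> \<le> 2 * intervalicity ?X" using right_ends_le[OF finX] left_starts_le[OF finX] by simp
  finally show ?thesis .
qed

lemma CE_bound: "S \<subseteq> Pts \<Longrightarrow> card (CE S) \<le> 4 * grid_complexity (emb ` S)"
proof -
  assume S: "S \<subseteq> Pts"
  let ?Ex = "{e \<in> Pts \<times> Pts. pos (snd e) = Suc (pos (fst e)) \<and> (fst e \<in> S \<longleftrightarrow> snd e \<notin> S)}"
  let ?Ey = "{e \<in> Pts \<times> Pts. val (snd e) = Suc (val (fst e)) \<and> (fst e \<in> S \<longleftrightarrow> snd e \<notin> S)}"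
  have "CE S = ?Ex \<union> ?Ey" unfolding CE_def by auto
  hence "card (CE S) \<le> card ?Ex + card ?Ey" by (simp add: card_Un_le)
  also have "\<dots> \<le> 2 * intervalicity (pos ` S) + 2 * intervalicity (val ` S)"
    using ends_bound[OF pos_inj S] ends_bound[OF val_inj S] by simp
  also have "\<dots> \<le> 4 * grid_complexity (emb ` S)"
  proof -
    have "fst ` emb ` S = pos ` S" "snd ` emb ` S = val ` S" unfolding emb_def by (auto simp: image_image)
    thus ?thesis unfolding grid_complexity_def by simp
  qed
  finally show ?thesis .
qed

end

context constr begin

lemma CE_mem: "a \<in> Pts \<Longrightarrow> b \<in> Pts \<Longrightarrow> kadj a b \<Longrightarrow> (a \<in> S) \<noteq> (b \<in> S) \<Longrightarrow> (a, b) \<in> CE S"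
  unfolding CE_def using kadj_adj by auto

lemma mixed_row_edge:
  assumes x: "x \<in> {1..PP}" and m: "Row x \<inter> S \<noteq> {}" "Row x - S \<noteq> {}"
  shows "\<exists>e\<in>CE S. fst e \<in> Row x"
proof -
  obtain i where i: "i < LL" "sig x i \<in> S" using m(1) unfolding Row_def by blast
  obtain j where j: "j < LL" "sig x j \<notin> S" using m(2) unfolding Row_def by blast
  obtain u where u: "u + 1 < LL" "(sig x u \<in> S) \<noteq> (sig x (u+1) \<in> S)"
    using ivt[of i LL "\<lambda>z. z \<in> S" "sig x" j] i j by blast
  have P: "sig x u \<in> Pts" "sig x (u+1) \<in> Pts" using sig_Pts x u(1) by auto
  have "(sig x u, sig x (u+1)) \<in> CE S" using CE_mem[OF P sig_adj[OF x u(1)] u(2)] .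
  moreover have "sig x u \<in> Row x" using u(1) unfolding Row_def by simp
  ultimately show ?thesis by force
qed

lemma mixed_col_edge:
  assumes q: "q < PP" and m: "Col q \<inter> S \<noteq> {}" "Col q - S \<noteq> {}"
  shows "\<exists>e\<in>CE S. fst e \<in> Col q"
proof -
  obtain i where i: "i < 2*PP" "tau q i \<in> S" using m(1) unfolding Col_def by blast
  obtain j where j: "j < 2*PP" "tau q j \<notin> S" using m(2) unfolding Col_def by blast
  obtain u where u: "u + 1 < 2*PP" "(tau q u \<in> S) \<noteq> (tau q (u+1) \<in> S)"
    using ivt[of i "2*PP" "\<lambda>z. z \<in> S" "tau q" j] i j by blast
  have P: "tau q u \<in> Pts" "tau q (u+1) \<in> Pts" using tau_Pts q u(1) by auto
  have "(tau q u, tau q (u+1)) \<in> CE S" using CE_mem[OF P tau_adj u(2)] .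
  moreover have "tau q u \<in> Col q" using u(1) unfolding Col_def by simp
  ultimately show ?thesis by force
qed

lemma emb_inj: "inj_on emb Pts"
proof (rule inj_onI)
  fix p q assume "p \<in> Pts" "q \<in> Pts" "emb p = emb q"
  thus "p = q" using inj_onD[OF pos_inj] unfolding emb_def by simp
qed

theorem main_bound:
  assumes w: "12*(w+1) \<le> PP"
  shows "w < grid_width nn perm"
proof (rule grid_width_gt)
  show "finite (diagram nn perm)" unfolding diagram_eq using fin_Pts by simp
  have "(0,1) \<in> Pts" unfolding Pts_def using r_pos NN_ge by auto
  thus "diagram nn perm \<noteq> {}" unfolding diagram_eq by blast
next
  fix T0 assume T0: "is_grid_tree (diagram nn perm) T0"
  have lv: "set (leaves T0) = emb ` Pts" using T0 unfolding is_grid_tree_def diagram_eq emb_def by simp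
  define U where "U = (\<Union>x\<in>{1..PP}. Row x)"
  have UP: "U \<subseteq> Pts" unfolding U_def using Row_Pts by blast
  have finU: "finite U" using UP fin_Pts finite_subset by blast
  define U' where "U' = emb ` U"
  have cU': "card U' = card U" unfolding U'_def using emb_inj UP by (metis card_image inj_on_subset)
  have PP1: "1 \<le> PP" using PP_ge s_pos by simp
  have "Row 1 \<subseteq> U" unfolding U_def using PP1 by auto
  hence "card (Row 1) \<le> card U" using finU by (simp add: card_mono)
  moreover have "card (Row 1) = LL" using Row_card PP1 by simp
  moreover have "2 \<le> LL" unfolding LL_def JJ_def using r_pos by simp
  ultimately have cU2: "2 \<le> card U" by simp
  have finU': "finite U'" unfolding U'_def using finU by simp
  have "U' \<subseteq> set (leaves T0)" unfolding lv U'_def using UP by blast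
  hence "set (leaves T0) \<inter> U' = U'" by blast
  hence root: "card U' < 3 * card (set (leaves T0) \<inter> U')" using cU2 cU' by simp
  obtain T' where T': "card U' < 3 * card (set (leaves T') \<inter> U')" "3 * card (set (leaves T') \<inter> U') \<le> 2 * card U'"
      "grid_complexity (set (leaves T')) \<le> tree_grid_width T0" "set (leaves T') \<subseteq> set (leaves T0)"
    using tree_sep[OF finU' _ root] cU2 cU' by auto
  define Lf where "Lf = set (leaves T')"
  define S where "S = {p\<in>Pts. emb p \<in> Lf}"
  have SP: "S \<subseteq> Pts" unfolding S_def by blast
  have LP: "Lf \<subseteq> emb ` Pts" using T'(4) lv unfolding Lf_def by simp
  have eS: "emb ` S = Lf"
  proof
    show "emb ` S \<subseteq> Lf" unfolding S_def by blast
    show "Lf \<subseteq> emb ` S"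
    proof
      fix z assume z: "z \<in> Lf"
      then obtain p where p: "p \<in> Pts" "z = emb p" using LP by blast
      hence "p \<in> S" unfolding S_def using z by simp
      thus "z \<in> emb ` S" using p by blast
    qed
  qed
  have LU: "Lf \<inter> U' = emb ` (U \<inter> S)" unfolding U'_def S_def using UP by blast
  have cLU: "card (Lf \<inter> U') = card (U \<inter> S)" unfolding LU using emb_inj UP
    by (metis card_image inj_on_subset le_infI1)
  have b1: "card U < 3 * card (U \<inter> S)" using T'(1) cU' cLU unfolding Lf_def by simp
  have b2: "3 * card (U \<inter> S) \<le> 2 * card U" using T'(2) cU' cLU unfolding Lf_def by simp
  have isoR: "card {1..PP} \<le> 3 * card {x\<in>{1..PP}. Row x \<inter> S \<noteq> {} \<and> Row x - S \<noteq> {}} \<or>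
      (\<forall>q\<in>{..<PP}. Col q \<inter> S \<noteq> {} \<and> Col q - S \<noteq> {})"
  proof (rule iso[of "{1..PP}" Row LL "{..<PP}" Col U S])
    show "finite {1..PP}" by simp
    show "\<forall>x\<in>{1..PP}. finite (Row x)" using Row_Pts fin_Pts finite_subset by blast
    show "\<forall>x\<in>{1..PP}. card (Row x) = LL" using Row_card by blast
    show "\<forall>x\<in>{1..PP}. \<forall>y\<in>{1..PP}. x \<noteq> y \<longrightarrow> Row x \<inter> Row y = {}" using Row_disj by blast
    show "\<forall>x\<in>{1..PP}. \<forall>q\<in>{..<PP}. Row x \<inter> Col q \<noteq> {}" using Row_Col by blast
    show "U = (\<Union>x\<in>{1..PP}. Row x)" by (rule U_def)
  qed (use b1 b2 in auto)
  have "PP \<le> 3 * card (CE S)"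
  proof (cases "\<forall>q\<in>{..<PP}. Col q \<inter> S \<noteq> {} \<and> Col q - S \<noteq> {}")
    case True
    have "card {..<PP} \<le> card (CE S)"
      by (rule mixed_le[of _ _ Col]) (use True mixed_col_edge Col_disj fin_CE in auto)
    thus ?thesis by simp
  next
    case False
    hence "card {1..PP} \<le> 3 * card {x\<in>{1..PP}. Row x \<inter> S \<noteq> {} \<and> Row x - S \<noteq> {}}" using isoR by blast
    hence "PP \<le> 3 * card {x\<in>{1..PP}. Row x \<inter> S \<noteq> {} \<and> Row x - S \<noteq> {}}" by simp
    moreover have "card {x\<in>{1..PP}. Row x \<inter> S \<noteq> {} \<and> Row x - S \<noteq> {}} \<le> card (CE S)"
      by (rule mixed_le[of _ _ Row]) (use mixed_row_edge Row_disj fin_CE in auto)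
    ultimately show ?thesis by simp
  qed
  also have "\<dots> \<le> 12 * grid_complexity (emb ` S)" using CE_bound[OF SP] by simp
  also have "\<dots> \<le> 12 * tree_grid_width T0" using T'(3) eS unfolding Lf_def by simp
  finally show "w < tree_grid_width T0" using w by simp
qed

end

theorem mainTheorem6:
  fixes k l :: nat and M :: "nat \<Rightarrow> nat \<Rightarrow> cell"
  assumes "cg_has_cycle k l M"
  shows "\<forall>w::nat. \<exists>n \<pi>. n \<ge> 1 \<and> in_Grid k l M n \<pi> \<and> grid_width n \<pi> > w"
proof
  fix w :: nat
  obtain r T where tr: "turns k l M r T" using cycle_turns[OF assms] by blast
  interpret C: constr k l M r T "12*(w+1)"
    by unfold_locales (use tr in auto)
  have "12*(w+1) \<le> C.PP" by (rule C.PP_ge)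
  hence "w < grid_width C.nn C.perm" by (rule C.main_bound)
  thus "\<exists>n \<pi>. n \<ge> 1 \<and> in_Grid k l M n \<pi> \<and> grid_width n \<pi> > w"
    using C.nn_pos C.in_grid by blast
qed


end
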